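(* There exist absolute constants $q_0$ and $C>0$ such that the following holds. Let $q\geq q_0$ be an integer, let $\Delta\in\mathbb{N}$ with $\Delta\leq\frac{\log q}{\log2}$, and let $n$ be a positive integer. Then \[ \frac{1}{n!}\sum_{j=1}^{\Delta}\sum_{\pi\in S_n}\binom{c_1(\pi^q)+\cdots+c_{j+1}(\pi^q)}{\Delta-j}\leq \begin{cases} C & \text{if }\Delta=1,\\ C\,\sigma_0(q) & \text{if }\Delta=2,\\ C\,\sigma_1(q) & \text{if }\Delta=3,\\ C\,\frac{1}{(\Delta-1)!}q^{\Delta-2} & \text{if }\Delta\geq4. \end{cases} \]
   Context: For a permutation $\sigma\in S_n$ and $d\geq1$, $c_d(\sigma)$ is the number of $d$-cycles of $\sigma$ (zero if $d>n$). For real $\alpha$, $\sigma_\alpha(q)=\sum_{d\mid q}d^\alpha$. $\mathbb{N}$ denotes the positive integers. *)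

theory Defs
  imports Complex_Main "HOL-Combinatorics.Combinatorics"
begin

definition cyc_count :: "nat \<Rightarrow> (nat \<Rightarrow> nat) \<Rightarrow> nat \<Rightarrow> nat" where
  "cyc_count n \<sigma> d = card {orbit \<sigma> x | x. x \<in> {1..n} \<and> card (orbit \<sigma> x) = d}"

definition divisor_sigma :: "real \<Rightarrow> nat \<Rightarrow> real" where
  "divisor_sigma \<alpha> q = (\<Sum>d\<in>{d. d dvd q}. real d powr \<alpha>)"

end

theory Submission
  imports Defs
begin


definition ncyc :: "'a set \<Rightarrow> nat" where
  "ncyc C = card {\<tau>. \<tau> permutes C \<and> cyclic_on \<tau> C}"

lemma restr_permutes_cyclic:
  assumes "\<pi> permutes S" "finite S" "C \<subseteq> S" "cyclic_on \<pi> C"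
  shows "perm_restrict \<pi> C permutes C"
proof (rule bij_imp_permutes)
  have img: "\<pi> ` C = C"
  proof
    show "\<pi> ` C \<subseteq> C" using assms(4) by (auto simp: cyclic_on_def intro: orbit.intros)
    show "C \<subseteq> \<pi> ` C"
    proof
      fix y assume y: "y \<in> C"
      obtain x where x: "\<pi> x = y" using assms(1) by (metis permutes_surj surj_def)
      then have "x \<in> C" using cyclic_on_f_in[OF assms(1) assms(4)] y by auto
      then show "y \<in> \<pi> ` C" using x by auto
    qed
  qed
  have "inj_on \<pi> C" using permutes_inj[OF assms(1)] by (auto simp: inj_on_def inj_def)
  then have "bij_betw \<pi> C C" using img by (simp add: bij_betw_def)
  then show "bij_betw (perm_restrict \<pi> C) C C"
    by (rule bij_betw_cong[THEN iffD1, rotated]) (simp add: perm_restrict_def)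
qed (simp add: perm_restrict_def)

lemma restr_comp1:
  assumes "\<tau> permutes C" "\<sigma> permutes (S - C)"
  shows "perm_restrict (\<sigma> \<circ> \<tau>) C = \<tau>" "perm_restrict (\<sigma> \<circ> \<tau>) (S - C) = \<sigma>"
proof -
  show "perm_restrict (\<sigma> \<circ> \<tau>) C = \<tau>"
  proof
    fix x show "perm_restrict (\<sigma> \<circ> \<tau>) C x = \<tau> x"
    proof (cases "x \<in> C")
      case True
      then have "\<tau> x \<in> C" using permutes_in_image[OF assms(1)] by auto
      then show ?thesis using True permutes_not_in[OF assms(2)] by (auto simp: perm_restrict_def)
    next
      case False then show ?thesis using permutes_not_in[OF assms(1)] by (auto simp: perm_restrict_def)
    qed
  qed
  show "perm_restrict (\<sigma> \<circ> \<tau>) (S - C) = \<sigma>"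
  proof
    fix x show "perm_restrict (\<sigma> \<circ> \<tau>) (S - C) x = \<sigma> x"
    proof (cases "x \<in> S - C")
      case True
      then show ?thesis using permutes_not_in[OF assms(1)] by (auto simp: perm_restrict_def)
    next
      case False then show ?thesis using permutes_not_in[OF assms(2)] by (auto simp: perm_restrict_def)
    qed
  qed
qed

lemma bij_cyc:
  assumes "finite S" "C \<subseteq> S" "C \<noteq> {}"
  shows "bij_betw (\<lambda>(\<tau>,\<sigma>). \<sigma> \<circ> \<tau>) ({\<tau>. \<tau> permutes C \<and> cyclic_on \<tau> C} \<times> {\<sigma>. \<sigma> permutes (S - C)})
           {\<pi>. \<pi> permutes S \<and> C \<in> orbit \<pi> ` S}"
proof (rule bij_betw_byWitness[where f'="\<lambda>\<pi>. (perm_restrict \<pi> C, perm_restrict \<pi> (S - C))"])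
  show "\<forall>a\<in>{\<tau>. \<tau> permutes C \<and> cyclic_on \<tau> C} \<times> {\<sigma>. \<sigma> permutes (S - C)}.
          (\<lambda>\<pi>. (perm_restrict \<pi> C, perm_restrict \<pi> (S - C))) ((\<lambda>(\<tau>, \<sigma>). \<sigma> \<circ> \<tau>) a) = a"
    using restr_comp1 by auto
  show "\<forall>a'\<in>{\<pi>. \<pi> permutes S \<and> C \<in> orbit \<pi> ` S}.
          (\<lambda>(\<tau>, \<sigma>). \<sigma> \<circ> \<tau>) ((\<lambda>\<pi>. (perm_restrict \<pi> C, perm_restrict \<pi> (S - C))) a') = a'"
  proof
    fix \<pi> assume "\<pi> \<in> {\<pi>. \<pi> permutes S \<and> C \<in> orbit \<pi> ` S}"
    then have p: "\<pi> permutes S" and "C \<in> orbit \<pi> ` S" by auto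
    then have cyc: "cyclic_on \<pi> C" using cyclic_on_orbit[OF p assms(1)] by auto
    have "perm_restrict \<pi> (S - C) \<circ> perm_restrict \<pi> C = perm_restrict \<pi> ((S - C) \<union> C)"
      by (rule perm_restrict_comp) (use cyc in auto)
    also have "(S - C) \<union> C = S" using assms by auto
    finally show "(\<lambda>(\<tau>, \<sigma>). \<sigma> \<circ> \<tau>) ((\<lambda>\<pi>. (perm_restrict \<pi> C, perm_restrict \<pi> (S - C))) \<pi>) = \<pi>"
      using p by (simp add: comp_def)
  qed
  show "(\<lambda>(\<tau>, \<sigma>). \<sigma> \<circ> \<tau>) ` ({\<tau>. \<tau> permutes C \<and> cyclic_on \<tau> C} \<times> {\<sigma>. \<sigma> permutes (S - C)})
        \<subseteq> {\<pi>. \<pi> permutes S \<and> C \<in> orbit \<pi> ` S}"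
  proof clarsimp
    fix \<tau> \<sigma> assume t: "\<tau> permutes C" "cyclic_on \<tau> C" and s: "\<sigma> permutes (S - C)"
    have ps: "\<sigma> \<circ> \<tau> permutes S"
      by (rule permutes_compose) (use t s assms permutes_subset in auto)
    obtain x where x: "x \<in> C" using assms by auto
    have "orbit (\<sigma> \<circ> \<tau>) x = orbit \<tau> x"
    proof (rule orbit_cong0[where A=C])
      show "x \<in> C" by fact
      show "\<sigma> \<circ> \<tau> \<in> C \<rightarrow> C" using t s permutes_in_image[OF t(1)] permutes_not_in[OF s] by auto
      show "\<And>y. y \<in> C \<Longrightarrow> (\<sigma> \<circ> \<tau>) y = \<tau> y" using permutes_in_image[OF t(1)] permutes_not_in[OF s] by auto
    qed
    also have "\<dots> = C" using orbit_cyclic_eq3[OF t(2) x] .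
    finally show "\<sigma> \<circ> \<tau> permutes S \<and> C \<in> orbit (\<sigma> \<circ> \<tau>) ` S" using ps x assms(2) by force
  qed
  show "(\<lambda>\<pi>. (perm_restrict \<pi> C, perm_restrict \<pi> (S - C))) ` {\<pi>. \<pi> permutes S \<and> C \<in> orbit \<pi> ` S}
        \<subseteq> {\<tau>. \<tau> permutes C \<and> cyclic_on \<tau> C} \<times> {\<sigma>. \<sigma> permutes (S - C)}"
  proof clarsimp
    fix \<pi> x assume p: "\<pi> permutes S" and x: "x \<in> S" and C: "C = orbit \<pi> x"
    have cyc: "cyclic_on \<pi> C" using cyclic_on_orbit[OF p assms(1)] C by auto
    show "perm_restrict \<pi> (orbit \<pi> x) permutes orbit \<pi> x \<and> cyclic_on (perm_restrict \<pi> (orbit \<pi> x)) (orbit \<pi> x) \<and>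
          perm_restrict \<pi> (S - orbit \<pi> x) permutes S - orbit \<pi> x"
      using restr_permutes_cyclic[OF p assms(1) assms(2) cyc] cyc perm_restrict_diff_cyclic[OF p cyc]
        cyclic_on_perm_restrict C by auto
  qed
qed

lemma cycle_sum_decomp:
  fixes F :: "'a set \<Rightarrow> ('a \<Rightarrow> 'a) \<Rightarrow> real"
  assumes "finite S"
  shows "(\<Sum>\<pi>\<in>{\<pi>. \<pi> permutes S}. \<Sum>c\<in>orbit \<pi> ` S. F c (perm_restrict \<pi> (S - c)))
       = (\<Sum>C\<in>{C. C \<subseteq> S \<and> C \<noteq> {}}. real (ncyc C) * (\<Sum>\<sigma>\<in>{\<sigma>. \<sigma> permutes (S - C)}. F C \<sigma>))"
proof -
  let ?P = "{C. C \<subseteq> S \<and> C \<noteq> {}}"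
  have finP: "finite ?P" using assms by auto
  have finPerm: "finite {\<pi>. \<pi> permutes S}" using assms finite_permutations by blast
  have "(\<Sum>\<pi>\<in>{\<pi>. \<pi> permutes S}. \<Sum>c\<in>orbit \<pi> ` S. F c (perm_restrict \<pi> (S - c)))
      = (\<Sum>\<pi>\<in>{\<pi>. \<pi> permutes S}. \<Sum>C\<in>?P. if C \<in> orbit \<pi> ` S then F C (perm_restrict \<pi> (S - C)) else 0)"
  proof (rule sum.cong[OF refl])
    fix \<pi> assume "\<pi> \<in> {\<pi>. \<pi> permutes S}"
    then have p: "\<pi> permutes S" by auto
    have sub: "orbit \<pi> ` S \<subseteq> ?P" using permutes_orbit_subset[OF p] by (auto simp: orbit_nonempty)
    show "(\<Sum>c\<in>orbit \<pi> ` S. F c (perm_restrict \<pi> (S - c)))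
        = (\<Sum>C\<in>?P. if C \<in> orbit \<pi> ` S then F C (perm_restrict \<pi> (S - C)) else 0)"
      by (subst sum.If_cases) (use finP sub in \<open>auto simp: Int_absorb1 intro!: sum.cong\<close>)
  qed
  also have "\<dots> = (\<Sum>C\<in>?P. \<Sum>\<pi>\<in>{\<pi>. \<pi> permutes S}. if C \<in> orbit \<pi> ` S then F C (perm_restrict \<pi> (S - C)) else 0)"
    by (rule sum.swap)
  also have "\<dots> = (\<Sum>C\<in>?P. \<Sum>\<pi>\<in>{\<pi>. \<pi> permutes S \<and> C \<in> orbit \<pi> ` S}. F C (perm_restrict \<pi> (S - C)))"
    by (rule sum.cong[OF refl], subst sum.inter_filter[symmetric]) (use finPerm in \<open>auto intro!: sum.cong\<close>)
  also have "\<dots> = (\<Sum>C\<in>?P. real (ncyc C) * (\<Sum>\<sigma>\<in>{\<sigma>. \<sigma> permutes (S - C)}. F C \<sigma>))"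
  proof (rule sum.cong[OF refl])
    fix C assume "C \<in> ?P"
    then have C: "C \<subseteq> S" "C \<noteq> {}" by auto
    have "(\<Sum>\<pi>\<in>{\<pi>. \<pi> permutes S \<and> C \<in> orbit \<pi> ` S}. F C (perm_restrict \<pi> (S - C)))
       = (\<Sum>x\<in>{\<tau>. \<tau> permutes C \<and> cyclic_on \<tau> C} \<times> {\<sigma>. \<sigma> permutes (S - C)}. F C (perm_restrict ((\<lambda>(\<tau>,\<sigma>). \<sigma> \<circ> \<tau>) x) (S - C)))"
      by (rule sum.reindex_bij_betw[symmetric, OF bij_cyc[OF assms C]])
    also have "\<dots> = (\<Sum>x\<in>{\<tau>. \<tau> permutes C \<and> cyclic_on \<tau> C} \<times> {\<sigma>. \<sigma> permutes (S - C)}. F C (snd x))"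
      by (rule sum.cong[OF refl]) (auto simp: restr_comp1)
    also have "\<dots> = (\<Sum>\<tau>\<in>{\<tau>. \<tau> permutes C \<and> cyclic_on \<tau> C}. \<Sum>\<sigma>\<in>{\<sigma>. \<sigma> permutes (S - C)}. F C \<sigma>)"
      using sum.cartesian_product[of "\<lambda>_ \<sigma>. F C \<sigma>" "{\<sigma>. \<sigma> permutes (S - C)}" "{\<tau>. \<tau> permutes C \<and> cyclic_on \<tau> C}"]
      by (simp add: split_def)
    also have "\<dots> = real (ncyc C) * (\<Sum>\<sigma>\<in>{\<sigma>. \<sigma> permutes (S - C)}. F C \<sigma>)"
      by (simp add: ncyc_def)
    finally show "(\<Sum>\<pi>\<in>{\<pi>. \<pi> permutes S \<and> C \<in> orbit \<pi> ` S}. F C (perm_restrict \<pi> (S - C)))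
       = real (ncyc C) * (\<Sum>\<sigma>\<in>{\<sigma>. \<sigma> permutes (S - C)}. F C \<sigma>)" .
  qed
  finally show ?thesis .
qed

lemma sum_pow_card:
  fixes h :: "nat \<Rightarrow> real"
  assumes "finite A"
  shows "(\<Sum>D\<in>Pow A. h (card D)) = (\<Sum>L\<le>card A. real (card A choose L) * h L)"
proof -
  have "(\<Sum>D\<in>Pow A. h (card D)) = (\<Sum>L\<le>card A. \<Sum>D\<in>{D. D \<in> Pow A \<and> card D = L}. h (card D))"
    by (rule sum.group[symmetric]) (use assms card_mono in auto)
  also have "\<dots> = (\<Sum>L\<le>card A. real (card A choose L) * h L)"
  proof (rule sum.cong[OF refl])
    fix L
    have "(\<Sum>D\<in>{D. D \<in> Pow A \<and> card D = L}. h (card D)) = (\<Sum>D\<in>{D. D \<subseteq> A \<and> card D = L}. h L)"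
      by (rule sum.cong) auto
    also have "\<dots> = real (card A choose L) * h L"
      using n_subsets[OF assms, of L] by simp
    finally show "(\<Sum>D\<in>{D. D \<in> Pow A \<and> card D = L}. h (card D)) = real (card A choose L) * h L" .
  qed
  finally show ?thesis .
qed

lemma sum_fact_choose:
  "(\<Sum>L\<le>m. real (m choose L) * (fact L * fact (m - L))) = real (Suc m) * fact m"
proof -
  have "(\<Sum>L\<le>m. real (m choose L) * (fact L * fact (m - L))) = (\<Sum>L\<le>m. (fact m :: real))"
    by (rule sum.cong[OF refl]) (simp add: binomial_fact field_simps)
  then show ?thesis by simp
qed

lemma one_cycle_containing:
  assumes "\<pi> permutes S" "finite S" "a \<in> S"
  shows "{c \<in> orbit \<pi> ` S. a \<in> c} = {orbit \<pi> a}"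
proof -
  have perm: "permutation \<pi>" using assms permutation_permutes by blast
  have "orbit \<pi> x = orbit \<pi> a" if "a \<in> orbit \<pi> x" for x
    using orbit_cyclic_eq3[OF cyclic_on_orbit[OF assms(1,2)] that] by simp
  moreover have "a \<in> orbit \<pi> a" using permutation_self_in_orbit[OF perm] .
  ultimately show ?thesis using assms(3) by blast
qed

lemma ncyc_eq:
  assumes "finite S" "S \<noteq> {}"
  shows "real (ncyc S) = fact (card S - 1)"
  using assms
proof (induction "card S" arbitrary: S rule: less_induct)
  case less
  obtain a where a: "a \<in> S" using less.prems by auto
  define n where "n = card S"
  have n1: "n \<ge> 1" using less.prems n_def by (simp add: Suc_leI card_gt_0_iff)
  have cardSa: "card (S - {a}) = n - 1" using a less.prems n_def by simp
  have "(\<Sum>\<pi>\<in>{\<pi>. \<pi> permutes S}. \<Sum>c\<in>orbit \<pi> ` S. (\<lambda>c (\<sigma>::'a\<Rightarrow>'a). if a \<in> c then 1 else 0::real) c (perm_restrict \<pi> (S - c)))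
       = (\<Sum>C\<in>{C. C \<subseteq> S \<and> C \<noteq> {}}. real (ncyc C) * (\<Sum>\<sigma>\<in>{\<sigma>. \<sigma> permutes (S - C)}. (\<lambda>c (\<sigma>::'a\<Rightarrow>'a). if a \<in> c then 1 else 0::real) C \<sigma>))"
    by (rule cycle_sum_decomp[OF less.prems(1)])
  moreover have "(\<Sum>\<pi>\<in>{\<pi>. \<pi> permutes S}. \<Sum>c\<in>orbit \<pi> ` S. (\<lambda>c (\<sigma>::'a\<Rightarrow>'a). if a \<in> c then 1 else 0::real) c (perm_restrict \<pi> (S - c)))
      = (\<Sum>\<pi>\<in>{\<pi>. \<pi> permutes S}. 1)"
  proof (rule sum.cong[OF refl])
    fix \<pi> assume "\<pi> \<in> {\<pi>. \<pi> permutes S}"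
    then have p: "\<pi> permutes S" by simp
    have fin: "finite (orbit \<pi> ` S)" using less.prems by simp
    have "(\<Sum>c\<in>orbit \<pi> ` S. (if a \<in> c then 1 else 0::real)) = real (card {c \<in> orbit \<pi> ` S. a \<in> c})"
      using fin by (simp add: sum.If_cases Int_def)
    also have "\<dots> = 1" using one_cycle_containing[OF p less.prems(1) a] by simp
    finally show "(\<Sum>c\<in>orbit \<pi> ` S. (\<lambda>c (\<sigma>::'a\<Rightarrow>'a). if a \<in> c then 1 else 0::real) c (perm_restrict \<pi> (S - c))) = 1"
      by simp
  qed
  moreover have "(\<Sum>\<pi>\<in>{\<pi>. \<pi> permutes S}. (1::real)) = fact n"
    using card_permutations[OF refl less.prems(1)] n_def by simp
  moreover have "(\<Sum>C\<in>{C. C \<subseteq> S \<and> C \<noteq> {}}. real (ncyc C) * (\<Sum>\<sigma>\<in>{\<sigma>. \<sigma> permutes (S - C)}. (\<lambda>c (\<sigma>::'a\<Rightarrow>'a). if a \<in> c then 1 else 0::real) C \<sigma>))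
     = (\<Sum>C\<in>{C. C \<subseteq> S \<and> C \<noteq> {}}. real (ncyc C) * (if a \<in> C then fact (n - card C) else 0))"
  proof (rule sum.cong[OF refl])
    fix C assume "C \<in> {C. C \<subseteq> S \<and> C \<noteq> {}}"
    then have C: "C \<subseteq> S" by auto
    have fC: "finite C" using C less.prems(1) finite_subset by blast
    have "card (S - C) = n - card C" using C fC n_def by (simp add: card_Diff_subset)
    then have "card {\<sigma>. \<sigma> permutes (S - C)} = fact (n - card C)"
      using card_permutations[OF refl, of "S - C"] less.prems(1) by simp
    then show "real (ncyc C) * (\<Sum>\<sigma>\<in>{\<sigma>. \<sigma> permutes (S - C)}. (\<lambda>c (\<sigma>::'a\<Rightarrow>'a). if a \<in> c then 1 else 0::real) C \<sigma>)
       = real (ncyc C) * (if a \<in> C then fact (n - card C) else 0)"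
      by simp
  qed
  ultimately have eq: "fact n = (\<Sum>C\<in>{C. C \<subseteq> S \<and> C \<noteq> {}}. real (ncyc C) * (if a \<in> C then fact (n - card C) else 0))"
    by simp
  also have "\<dots> = (\<Sum>C\<in>{C. C \<subseteq> S \<and> a \<in> C}. real (ncyc C) * fact (n - card C))"
  proof -
    have "(\<Sum>C\<in>{C. C \<subseteq> S \<and> C \<noteq> {}}. real (ncyc C) * (if a \<in> C then fact (n - card C) else 0))
        = (\<Sum>C\<in>{C. C \<subseteq> S \<and> C \<noteq> {}} \<inter> {C. a \<in> C}. real (ncyc C) * fact (n - card C))"
    proof -
      have "(\<Sum>C\<in>{C. C \<subseteq> S \<and> C \<noteq> {}}. real (ncyc C) * (if a \<in> C then fact (n - card C) else 0))
         = (\<Sum>C\<in>{C. C \<subseteq> S \<and> C \<noteq> {}}. if C \<in> {C. a \<in> C} then real (ncyc C) * fact (n - card C) else 0)"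
        by (rule sum.cong) auto
      also have "\<dots> = (\<Sum>C\<in>{C. C \<subseteq> S \<and> C \<noteq> {}} \<inter> {C. a \<in> C}. real (ncyc C) * fact (n - card C))"
        by (rule sum.inter_restrict[symmetric]) (use less.prems in auto)
      finally show ?thesis .
    qed
    also have "{C. C \<subseteq> S \<and> C \<noteq> {}} \<inter> {C. a \<in> C} = {C. C \<subseteq> S \<and> a \<in> C}" by auto
    finally show ?thesis .
  qed
  also have "\<dots> = (\<Sum>D\<in>Pow (S - {a}). real (ncyc (insert a D)) * fact (n - card (insert a D)))"
  proof -
    have "{C. C \<subseteq> S \<and> a \<in> C} = insert a ` Pow (S - {a})"
    proof (intro set_eqI iffI)
      fix C assume "C \<in> {C. C \<subseteq> S \<and> a \<in> C}"
      then have "C = insert a (C - {a})" "C - {a} \<in> Pow (S - {a})" by auto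
      then show "C \<in> insert a ` Pow (S - {a})" by blast
    qed (use a in auto)
    moreover have "inj_on (insert a) (Pow (S - {a}))"
    proof (rule inj_onI)
      fix X Y assume "X \<in> Pow (S - {a})" "Y \<in> Pow (S - {a})" "insert a X = insert a Y"
      then show "X = Y" by (metis Diff_insert_absorb PowD insert_Diff_single subset_Diff_insert)
    qed
    ultimately show ?thesis by (simp add: sum.reindex)
  qed
  also have "\<dots> = real (ncyc S) + (\<Sum>D\<in>Pow (S - {a}) - {S - {a}}. fact (card D) * fact (n - 1 - card D))"
  proof -
    have fin: "finite (Pow (S - {a}))" using less.prems by simp
    have mem: "S - {a} \<in> Pow (S - {a})" by simp
    have "(\<Sum>D\<in>Pow (S - {a}). real (ncyc (insert a D)) * fact (n - card (insert a D)))
       = real (ncyc (insert a (S - {a}))) * fact (n - card (insert a (S - {a}))) +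
         (\<Sum>D\<in>Pow (S - {a}) - {S - {a}}. real (ncyc (insert a D)) * fact (n - card (insert a D)))"
      by (rule sum.remove[OF fin mem])
    also have "insert a (S - {a}) = S" using a by auto
    also have "(\<Sum>D\<in>Pow (S - {a}) - {S - {a}}. real (ncyc (insert a D)) * fact (n - card (insert a D)))
       = (\<Sum>D\<in>Pow (S - {a}) - {S - {a}}. fact (card D) * fact (n - 1 - card D))"
    proof (rule sum.cong[OF refl])
      fix D assume D: "D \<in> Pow (S - {a}) - {S - {a}}"
      then have Dsub: "D \<subset> S - {a}" by auto
      have finD: "finite D" using Dsub less.prems(1) by (meson finite_Diff finite_subset psubset_imp_subset)
      have "a \<notin> D" using Dsub by auto
      then have cins: "card (insert a D) = Suc (card D)" using finD by simp
      have "card (insert a D) < card S"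
        using Dsub a less.prems(1) by (intro psubset_card_mono) auto
      then have "real (ncyc (insert a D)) = fact (card (insert a D) - 1)"
        using less.hyps[of "insert a D"] finD by auto
      then show "real (ncyc (insert a D)) * fact (n - card (insert a D)) = fact (card D) * fact (n - 1 - card D)"
        using cins by simp
    qed
    finally show ?thesis using n_def by simp
  qed
  finally have eq2: "fact n = real (ncyc S) + (\<Sum>D\<in>Pow (S - {a}) - {S - {a}}. fact (card D) * fact (n - 1 - card D))" .
  have "(\<Sum>D\<in>Pow (S - {a}). (fact (card D) * fact (n - 1 - card D) :: real))
      = fact (n - 1) + (\<Sum>D\<in>Pow (S - {a}) - {S - {a}}. fact (card D) * fact (n - 1 - card D))"
  proof -
    have fin: "finite (Pow (S - {a}))" using less.prems by simp
    have mem: "S - {a} \<in> Pow (S - {a})" by simp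
    show ?thesis unfolding sum.remove[OF fin mem] using cardSa by simp
  qed
  moreover have "(\<Sum>D\<in>Pow (S - {a}). (fact (card D) * fact (n - 1 - card D) :: real)) = real n * fact (n - 1)"
  proof -
    have "(\<Sum>D\<in>Pow (S - {a}). (fact (card D) * fact (n - 1 - card D) :: real))
        = (\<Sum>L\<le>n - 1. real ((n - 1) choose L) * (fact L * fact (n - 1 - L)))"
      using sum_pow_card[of "S - {a}" "\<lambda>L. fact L * fact (n - 1 - L)"] less.prems cardSa by simp
    also have "\<dots> = real (Suc (n - 1)) * fact (n - 1)" by (rule sum_fact_choose)
    finally show ?thesis using n1 by simp
  qed
  ultimately have "fact n = real (ncyc S) + real n * fact (n - 1) - fact (n - 1)" using eq2 by linarith
  moreover have "(fact n :: real) = real n * fact (n - 1)" using n1 by (simp add: fact_reduce)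
  ultimately show ?case using n_def by simp
qed



definition Ys :: "nat \<Rightarrow> nat \<Rightarrow> 'a set \<Rightarrow> ('a \<Rightarrow> 'a) \<Rightarrow> 'a set set" where
  "Ys q k S \<pi> = {orbit (\<pi> ^^ q) x | x. x \<in> S \<and> card (orbit (\<pi> ^^ q) x) \<le> k}"

definition wq :: "nat \<Rightarrow> nat \<Rightarrow> nat \<Rightarrow> nat" where
  "wq q k L = (if \<exists>m\<in>{1..k}. L dvd q * m then gcd L q else 0)"

lemma card_orbit_lp:
  assumes "permutation p"
  shows "card (orbit p x) = least_power p x"
proof -
  have "orbit p x = set (support p x)"
    using support_set[OF assms, of x] orbit_altdef_permutation[OF assms, of x] by auto
  moreover have "distinct (support p x)" using cycle_of_permutation[OF assms] .
  then have "card (set (support p x)) = length (support p x)" by (rule distinct_card)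
  ultimately show ?thesis by (metis diff_zero length_map length_upt)
qed

lemma orbit_funpow_iff:
  assumes "permutation p"
  shows "(p ^^ n) x = x \<longleftrightarrow> card (orbit p x) dvd n"
  using least_power_dvd[OF assms] card_orbit_lp[OF assms] by simp

lemma orbit_same:
  assumes "permutation p" "z \<in> orbit p x"
  shows "orbit p z = orbit p x"
  using orbit_cyclic_eq3[OF cyclic_on_orbit'[OF assms(1)] assms(2)] .

lemma orbit_pow_subset:
  assumes "permutation p"
  shows "orbit (p ^^ q) x \<subseteq> orbit p x"
proof
  fix y assume "y \<in> orbit (p ^^ q) x"
  then obtain m where "y = ((p ^^ q) ^^ m) x" using orbit_altdef_permutation[OF permutation_funpow[OF assms]] by auto
  then have "y = (p ^^ (q * m)) x" by (simp add: funpow_mult)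
  then show "y \<in> orbit p x" using orbit_altdef_permutation[OF assms] by auto
qed

lemma self_in_orbit_pow:
  assumes "permutation p"
  shows "x \<in> orbit (p ^^ q) x"
  using permutation_self_in_orbit[OF permutation_funpow[OF assms]] .

lemma finite_orbit_perm:
  assumes "permutation p"
  shows "finite (orbit p x)"
  using finite_orbit[OF permutation_self_in_orbit[OF assms]] .

context
  fixes S :: "'a set" and \<pi> :: "'a \<Rightarrow> 'a"
  assumes perm: "\<pi> permutes S" and finS: "finite S"
begin

lemma permutation_pi: "permutation \<pi>"
  using perm finS permutation_permutes by blast

lemma restr_agree:
  assumes c: "c \<in> orbit \<pi> ` S"
  shows "x \<in> S - c \<Longrightarrow> (perm_restrict \<pi> (S - c) ^^ n) x = (\<pi> ^^ n) x \<and> (\<pi> ^^ n) x \<in> S - c"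
proof (induction n)
  case 0 then show ?case by simp
next
  case (Suc n)
  have cyc: "cyclic_on \<pi> c" using c cyclic_on_orbit[OF perm finS] by auto
  have "\<pi> ((\<pi> ^^ n) x) \<in> S - c"
  proof -
    have "(\<pi> ^^ n) x \<in> S" "(\<pi> ^^ n) x \<notin> c" using Suc by auto
    then show ?thesis using permutes_in_image[OF perm] cyclic_on_f_in[OF perm cyc] by blast
  qed
  then show ?case using Suc by (simp add: perm_restrict_def)
qed

lemma orbit_restr:
  assumes c: "c \<in> orbit \<pi> ` S" and x: "x \<in> S - c"
  shows "orbit (perm_restrict \<pi> (S - c) ^^ q) x = orbit (\<pi> ^^ q) x"
proof -
  have "((perm_restrict \<pi> (S - c) ^^ q) ^^ m) x = ((\<pi> ^^ q) ^^ m) x" for m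
    using restr_agree[OF c x, of "q * m"] by (simp add: funpow_mult)
  then show ?thesis by (simp add: orbit_altdef)
qed

lemma Ys_finite: "finite (Ys q k S \<pi>)"
proof -
  have "Ys q k S \<pi> \<subseteq> (\<lambda>x. orbit (\<pi> ^^ q) x) ` S" by (auto simp: Ys_def)
  then show ?thesis using finS finite_subset by blast
qed

lemma Ys_split:
  assumes c: "c \<in> orbit \<pi> ` S"
  shows "card (Ys q k S \<pi>) = card {y \<in> Ys q k S \<pi>. y \<subseteq> c} + card (Ys q k (S - c) (perm_restrict \<pi> (S - c)))"
proof -
  have cyc: "cyclic_on \<pi> c" using c cyclic_on_orbit[OF perm finS] by auto
  have eq: "{y \<in> Ys q k S \<pi>. \<not> y \<subseteq> c} = Ys q k (S - c) (perm_restrict \<pi> (S - c))"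
  proof (intro set_eqI iffI)
    fix y assume "y \<in> {y \<in> Ys q k S \<pi>. \<not> y \<subseteq> c}"
    then obtain x where x: "x \<in> S" "y = orbit (\<pi> ^^ q) x" "card (orbit (\<pi> ^^ q) x) \<le> k" "\<not> y \<subseteq> c"
      by (auto simp: Ys_def)
    have "x \<notin> c"
    proof
      assume "x \<in> c"
      then have "orbit \<pi> x = c" using orbit_cyclic_eq3[OF cyc] by auto
      then show False using x orbit_pow_subset[OF permutation_pi, of q x] by auto
    qed
    then have xSc: "x \<in> S - c" using x by auto
    have "y = orbit (perm_restrict \<pi> (S - c) ^^ q) x" using x orbit_restr[OF c xSc] by simp
    moreover have "card (orbit (perm_restrict \<pi> (S - c) ^^ q) x) \<le> k" using x orbit_restr[OF c xSc] by simp
    ultimately show "y \<in> Ys q k (S - c) (perm_restrict \<pi> (S - c))"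
      unfolding Ys_def using xSc by blast
  next
    fix y assume "y \<in> Ys q k (S - c) (perm_restrict \<pi> (S - c))"
    then obtain x where x: "x \<in> S - c" "y = orbit (perm_restrict \<pi> (S - c) ^^ q) x"
       "card (orbit (perm_restrict \<pi> (S - c) ^^ q) x) \<le> k"
      by (auto simp: Ys_def)
    then have y: "y = orbit (\<pi> ^^ q) x" using orbit_restr[OF c x(1)] by simp
    then have "x \<in> y" using self_in_orbit_pow[OF permutation_pi] by simp
    then show "y \<in> {y \<in> Ys q k S \<pi>. \<not> y \<subseteq> c}"
      using x y orbit_restr[OF c x(1)] unfolding Ys_def by auto
  qed
  have "Ys q k S \<pi> = {y \<in> Ys q k S \<pi>. y \<subseteq> c} \<union> {y \<in> Ys q k S \<pi>. \<not> y \<subseteq> c}" by auto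
  then have "card (Ys q k S \<pi>) = card {y \<in> Ys q k S \<pi>. y \<subseteq> c} + card {y \<in> Ys q k S \<pi>. \<not> y \<subseteq> c}"
    using Ys_finite[of q k] by (metis (no_types, lifting) card_Un_disjoint disjoint_iff finite_Un mem_Collect_eq)
  then show ?thesis using eq by simp
qed

lemma Ys_sum:
  "card (Ys q k S \<pi>) = (\<Sum>c\<in>orbit \<pi> ` S. card {y \<in> Ys q k S \<pi>. y \<subseteq> c})"
proof -
  have U: "Ys q k S \<pi> = (\<Union>c\<in>orbit \<pi> ` S. {y \<in> Ys q k S \<pi>. y \<subseteq> c})"
  proof (intro set_eqI iffI)
    fix y assume y: "y \<in> Ys q k S \<pi>"
    then obtain x where "x \<in> S" "y = orbit (\<pi> ^^ q) x" by (auto simp: Ys_def)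
    then show "y \<in> (\<Union>c\<in>orbit \<pi> ` S. {y \<in> Ys q k S \<pi>. y \<subseteq> c})"
      using y orbit_pow_subset[OF permutation_pi, of q x] by auto
  qed auto
  have disj: "{y \<in> Ys q k S \<pi>. y \<subseteq> c1} \<inter> {y \<in> Ys q k S \<pi>. y \<subseteq> c2} = {}"
    if cc: "c1 \<in> orbit \<pi> ` S" "c2 \<in> orbit \<pi> ` S" "c1 \<noteq> c2" for c1 c2
  proof (rule ccontr)
    assume "{y \<in> Ys q k S \<pi>. y \<subseteq> c1} \<inter> {y \<in> Ys q k S \<pi>. y \<subseteq> c2} \<noteq> {}"
    then obtain y where y: "y \<in> Ys q k S \<pi>" "y \<subseteq> c1" "y \<subseteq> c2" by auto
    then obtain x where "y = orbit (\<pi> ^^ q) x" by (auto simp: Ys_def)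
    then have x12: "x \<in> c1" "x \<in> c2" using y self_in_orbit_pow[OF permutation_pi, of x q] by auto
    obtain a1 a2 where a: "c1 = orbit \<pi> a1" "c2 = orbit \<pi> a2" using cc by auto
    then show False using x12 cc orbit_same[OF permutation_pi, of x a1] orbit_same[OF permutation_pi, of x a2] by auto
  qed
  have "card (\<Union>c\<in>orbit \<pi> ` S. {y \<in> Ys q k S \<pi>. y \<subseteq> c}) = (\<Sum>c\<in>orbit \<pi> ` S. card {y \<in> Ys q k S \<pi>. y \<subseteq> c})"
    by (rule card_UN_disjoint) (use finS Ys_finite disj in auto)
  then show ?thesis using U by simp
qed

lemma Ys_bound:
  assumes c: "c \<in> orbit \<pi> ` S"
  shows "card {y \<in> Ys q k S \<pi>. y \<subseteq> c} \<le> wq q k (card c)"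
proof (cases "{y \<in> Ys q k S \<pi>. y \<subseteq> c} = {}")
  case True then show ?thesis by (metis card.empty zero_le)
next
  case False
  define L where "L = card c"
  define g where "g = gcd L q"
  define Z where "Z = {y \<in> Ys q k S \<pi>. y \<subseteq> c}"
  have cyc: "cyclic_on \<pi> c" using c cyclic_on_orbit[OF perm finS] by auto
  have finc: "finite c" using finite_cyclic_on[OF cyc] .
  have cne: "c \<noteq> {}" using cyc by (auto simp: cyclic_on_def)
  have Lpos: "L > 0" using finc cne L_def by auto

  have key: "L dvd q * card y \<and> 1 \<le> card y \<and> card y \<le> k" if y: "y \<in> Z" for y
  proof -
    obtain x where x: "x \<in> S" "y = orbit (\<pi> ^^ q) x" "card y \<le> k" "y \<subseteq> c"
      using y by (auto simp: Z_def Ys_def)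
    have xy: "x \<in> y" using x self_in_orbit_pow[OF permutation_pi] by simp
    then have "x \<in> c" using x by auto
    then have oc: "orbit \<pi> x = c" using orbit_cyclic_eq3[OF cyc] by auto
    have pq: "permutation (\<pi> ^^ q)" using permutation_funpow[OF permutation_pi] .
    have fy: "finite y" using x finite_orbit_perm[OF pq] by simp
    have "((\<pi> ^^ q) ^^ card y) x = x" using orbit_funpow_iff[OF pq, of "card y" x] x by simp
    then have "(\<pi> ^^ (q * card y)) x = x" by (simp add: funpow_mult)
    then have "L dvd q * card y" using orbit_funpow_iff[OF permutation_pi, of "q * card y" x] oc L_def by simp
    moreover have "1 \<le> card y" using fy xy by (metis One_nat_def Suc_leI card_gt_0_iff empty_iff)
    ultimately show ?thesis using x by simp
  qed
  obtain y0 where y0: "y0 \<in> Z" using False Z_def by auto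
  have w: "wq q k L = g" using key[OF y0] by (auto simp: wq_def g_def)
  have gpos: "g > 0" using Lpos g_def by simp
  have Lg: "L = g * (L div g)" using g_def by simp
  have big: "L div g \<le> card y" if "y \<in> Z" for y
  proof -
    have "L dvd q * card y" "1 \<le> card y" using key[OF that] by auto
    moreover have "L = g * (L div g)" "q * card y = g * ((q div g) * card y)"
      using g_def by simp_all
    ultimately have "g * (L div g) dvd g * ((q div g) * card y)" by metis
    then have "L div g dvd (q div g) * card y" using gpos by simp
    moreover have "coprime (L div g) (q div g)" using g_def Lpos by (simp add: div_gcd_coprime)
    ultimately have "L div g dvd card y" using coprime_dvd_mult_right_iff by blast
    then show ?thesis using key[OF that] by (simp add: dvd_imp_le)
  qed
  have finZ: "finite Z" using Ys_finite Z_def by simp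
  have Zdisj: "y1 \<inter> y2 = {}" if yy: "y1 \<in> Z" "y2 \<in> Z" "y1 \<noteq> y2" for y1 y2
  proof (rule ccontr)
    assume "y1 \<inter> y2 \<noteq> {}"
    then obtain z where z: "z \<in> y1" "z \<in> y2" by auto
    obtain x1 where "y1 = orbit (\<pi> ^^ q) x1" using yy by (auto simp: Z_def Ys_def)
    moreover obtain x2 where "y2 = orbit (\<pi> ^^ q) x2" using yy by (auto simp: Z_def Ys_def)
    ultimately have "orbit (\<pi> ^^ q) z = y1" "orbit (\<pi> ^^ q) z = y2"
      using z orbit_same[OF permutation_funpow[OF permutation_pi], of z q x1]
        orbit_same[OF permutation_funpow[OF permutation_pi], of z q x2] by blast+
    then show False using yy by simp
  qed
  have finy: "finite y" if "y \<in> Z" for y using that finc by (auto simp: Z_def intro: finite_subset)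
  have "card Z * (L div g) = (\<Sum>y\<in>Z. L div g)" by simp
  also have "\<dots> \<le> (\<Sum>y\<in>Z. card y)" using big by (intro sum_mono) auto
  also have "\<dots> = card (\<Union>Z)" using card_Union_disjoint[of Z] finZ finy Zdisj
    by (simp add: pairwise_def disjnt_def)
  also have "\<dots> \<le> card c" using finc by (intro card_mono) (auto simp: Z_def)
  finally have "card Z * (L div g) \<le> g * (L div g)" using Lg L_def by simp
  moreover have "L div g > 0" using Lg Lpos by (metis gr0I mult_0_right)
  ultimately have "card Z \<le> g" by simp
  then show ?thesis using w Z_def L_def by simp
qed

end



lemma wchoose_id:
  assumes "w \<ge> 1" "r \<ge> 1"
  shows "w * ((w - 1 + M) choose (r - 1)) = (\<Sum>i=1..r. i * (w choose i) * (M choose (r - i)))"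
proof -
  obtain v where v: "w = Suc v" using assms by (cases w) auto
  obtain s where s: "r = Suc s" using assms by (cases r) auto
  have "w * ((w - 1 + M) choose (r - 1)) = Suc v * (\<Sum>j\<le>s. (v choose j) * (M choose (s - j)))"
    using vandermonde[of v M s] v s by simp
  also have "\<dots> = (\<Sum>j\<le>s. (Suc v * (v choose j)) * (M choose (s - j)))"
    by (simp only: sum_distrib_left mult.assoc)
  also have "\<dots> = (\<Sum>j\<le>s. Suc j * (Suc v choose Suc j) * (M choose (Suc s - Suc j)))"
    by (rule sum.cong[OF refl]) (simp only: Suc_times_binomial_eq, simp)
  also have "\<dots> = (\<Sum>j=0..s. Suc j * (Suc v choose Suc j) * (M choose (Suc s - Suc j)))"
    by (simp add: atLeast0AtMost)
  also have "\<dots> = (\<Sum>i=Suc 0..Suc s. i * (Suc v choose i) * (M choose (Suc s - i)))"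
    by (rule sum.shift_bounds_cl_Suc_ivl[symmetric])
  finally show ?thesis using v s by simp
qed

lemma wq_zero:
  assumes "q \<ge> 1" "L > k * q"
  shows "wq q k L = 0"
proof -
  have "\<not> L dvd q * m" if "m \<in> {1..k}" for m
  proof
    assume "L dvd q * m"
    moreover have "q * m > 0" using that assms by auto
    ultimately have "L \<le> q * m" by (simp add: dvd_imp_le)
    also have "\<dots> \<le> k * q" using that by (simp add: mult.commute)
    finally show False using assms by simp
  qed
  then show ?thesis by (auto simp: wq_def)
qed

definition pp :: "nat \<Rightarrow> nat \<Rightarrow> nat \<Rightarrow> real" where
  "pp q k t = (\<Sum>L\<in>{1..k*q}. real (wq q k L choose t) / real L)"

lemma pp_ge: 
  assumes "q \<ge> 1" "t \<ge> 1"
  shows "(\<Sum>L\<in>{1..n}. real (wq q k L choose t) / real L) \<le> pp q k t"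
proof -
  have "(\<Sum>L\<in>{1..n}. real (wq q k L choose t) / real L) = (\<Sum>L\<in>{1..n} \<inter> {1..k*q}. real (wq q k L choose t) / real L)"
    by (rule sum.mono_neutral_right) (use wq_zero[OF assms(1)] assms(2) in auto)
  also have "\<dots> \<le> pp q k t" unfolding pp_def by (rule sum_mono2) auto
  finally show ?thesis .
qed

lemma per_perm_bound:
  assumes perm: "\<pi> permutes S" and finS: "finite S" and r: "r \<ge> 1"
  shows "real r * real (card (Ys q k S \<pi>) choose r)
     \<le> (\<Sum>c\<in>orbit \<pi> ` S. \<Sum>i=1..r. real i * real (wq q k (card c) choose i)
            * real (card (Ys q k (S - c) (perm_restrict \<pi> (S - c))) choose (r - i)))"
proof -
  define N where "N = card (Ys q k S \<pi>)"
  define m where "m c = card {y \<in> Ys q k S \<pi>. y \<subseteq> c}" for c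
  have Nsum: "N = (\<Sum>c\<in>orbit \<pi> ` S. m c)" using Ys_sum[OF perm finS] N_def m_def by simp
  have "r * (N choose r) = N * ((N - 1) choose (r - 1))"
    using binomial_absorption[of "r - 1" N] r by simp
  also have "\<dots> = (\<Sum>c\<in>orbit \<pi> ` S. m c * ((N - 1) choose (r - 1)))"
    using Nsum by (simp add: sum_distrib_right)
  finally have eq1: "real r * real (N choose r) = (\<Sum>c\<in>orbit \<pi> ` S. real (m c * ((N - 1) choose (r - 1))))"
    by (metis of_nat_mult of_nat_sum)
  show ?thesis unfolding N_def[symmetric] eq1
  proof (rule sum_mono)
    fix c assume c: "c \<in> orbit \<pi> ` S"
    define M where "M = card (Ys q k (S - c) (perm_restrict \<pi> (S - c)))"
    define w where "w = wq q k (card c)"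
    have split: "N = m c + M" using Ys_split[OF perm finS c] N_def m_def M_def by simp
    have mw: "m c \<le> w" using Ys_bound[OF perm finS c] m_def w_def by simp
    show "real (m c * ((N - 1) choose (r - 1)))
        \<le> (\<Sum>i=1..r. real i * real (wq q k (card c) choose i) * real (M choose (r - i)))"
    proof (cases "m c = 0")
      case True then show ?thesis by (simp add: sum_nonneg)
    next
      case False
      then have "m c * ((N - 1) choose (r - 1)) = m c * ((m c - 1 + M) choose (r - 1))" using split by simp
      also have "\<dots> \<le> w * ((w - 1 + M) choose (r - 1))"
        using mw False by (intro mult_mono binomial_right_mono) auto
      also have "\<dots> = (\<Sum>i=1..r. i * (w choose i) * (M choose (r - i)))"
        using wchoose_id[of w r M] mw False r by simp
      finally have "real (m c * ((N - 1) choose (r - 1))) \<le> real (\<Sum>i=1..r. i * (w choose i) * (M choose (r - i)))"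
        by (simp only: of_nat_le_iff)
      then show ?thesis using w_def by simp
    qed
  qed
qed

lemma main_ind:
  fixes B :: "nat \<Rightarrow> real"
  assumes q: "q \<ge> 1" and B0: "B 0 = 1" and Bnn: "\<And>r. B r \<ge> 0"
    and rec: "\<And>r. 1 \<le> r \<Longrightarrow> r \<le> R \<Longrightarrow> (\<Sum>i=1..r. real i * pp q k i * B (r - i)) \<le> real r * B r"
  shows "r \<le> R \<Longrightarrow> finite S \<Longrightarrow>
     (\<Sum>\<pi>\<in>{\<pi>. \<pi> permutes S}. real (card (Ys q k S \<pi>) choose r)) \<le> fact (card S) * B r"
proof (induction r arbitrary: S rule: less_induct)
  case (less r)
  note finS = less.prems(2)
  define n where "n = card S"
  show ?case
  proof (cases "r = 0")
    case True
    then show ?thesis using B0 card_permutations[OF refl finS] by simp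
  next
    case False
    then have r1: "r \<ge> 1" by simp
    define \<Phi> where "\<Phi> C \<sigma> = (\<Sum>i=1..r. real i * real (wq q k (card C) choose i)
            * real (card (Ys q k (S - C) \<sigma>) choose (r - i)))" for C \<sigma>
    have "real r * (\<Sum>\<pi>\<in>{\<pi>. \<pi> permutes S}. real (card (Ys q k S \<pi>) choose r))
        = (\<Sum>\<pi>\<in>{\<pi>. \<pi> permutes S}. real r * real (card (Ys q k S \<pi>) choose r))"
      by (simp add: sum_distrib_left)
    also have "\<dots> \<le> (\<Sum>\<pi>\<in>{\<pi>. \<pi> permutes S}. \<Sum>c\<in>orbit \<pi> ` S. \<Phi> c (perm_restrict \<pi> (S - c)))"
      unfolding \<Phi>_def by (rule sum_mono) (use per_perm_bound[OF _ finS r1] in auto)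
    also have "\<dots> = (\<Sum>C\<in>{C. C \<subseteq> S \<and> C \<noteq> {}}. real (ncyc C) * (\<Sum>\<sigma>\<in>{\<sigma>. \<sigma> permutes (S - C)}. \<Phi> C \<sigma>))"
      by (rule cycle_sum_decomp[OF finS])
    also have "\<dots> \<le> (\<Sum>C\<in>{C. C \<subseteq> S \<and> C \<noteq> {}}. fact (card C - 1) * fact (n - card C) *
            (\<Sum>i=1..r. real i * real (wq q k (card C) choose i) * B (r - i)))"
    proof (rule sum_mono)
      fix C assume "C \<in> {C. C \<subseteq> S \<and> C \<noteq> {}}"
      then have C: "C \<subseteq> S" "C \<noteq> {}" by auto
      have finC: "finite C" using C finS finite_subset by blast
      have cardSC: "card (S - C) = n - card C" using C finC n_def by (simp add: card_Diff_subset)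
      have "(\<Sum>\<sigma>\<in>{\<sigma>. \<sigma> permutes (S - C)}. \<Phi> C \<sigma>)
          = (\<Sum>i=1..r. real i * real (wq q k (card C) choose i) *
               (\<Sum>\<sigma>\<in>{\<sigma>. \<sigma> permutes (S - C)}. real (card (Ys q k (S - C) \<sigma>) choose (r - i))))"
        unfolding \<Phi>_def by (subst sum.swap) (simp add: sum_distrib_left)
      also have "\<dots> \<le> (\<Sum>i=1..r. real i * real (wq q k (card C) choose i) * (fact (n - card C) * B (r - i)))"
      proof (rule sum_mono)
        fix i assume i: "i \<in> {1..r}"
        have "(\<Sum>\<sigma>\<in>{\<sigma>. \<sigma> permutes (S - C)}. real (card (Ys q k (S - C) \<sigma>) choose (r - i)))
            \<le> fact (card (S - C)) * B (r - i)"
          using less.IH[of "r - i" "S - C"] i less.prems finS by auto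
        then show "real i * real (wq q k (card C) choose i) *
               (\<Sum>\<sigma>\<in>{\<sigma>. \<sigma> permutes (S - C)}. real (card (Ys q k (S - C) \<sigma>) choose (r - i)))
            \<le> real i * real (wq q k (card C) choose i) * (fact (n - card C) * B (r - i))"
          using cardSC by (intro mult_left_mono) auto
      qed
      also have "\<dots> = fact (n - card C) * (\<Sum>i=1..r. real i * real (wq q k (card C) choose i) * B (r - i))"
        by (simp add: sum_distrib_left mult_ac)
      finally have le: "(\<Sum>\<sigma>\<in>{\<sigma>. \<sigma> permutes (S - C)}. \<Phi> C \<sigma>) \<le> fact (n - card C) * (\<Sum>i=1..r. real i * real (wq q k (card C) choose i) * B (r - i))" .
      have nc: "real (ncyc C) = fact (card C - 1)" using ncyc_eq[OF finC C(2)] .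
      show "real (ncyc C) * (\<Sum>\<sigma>\<in>{\<sigma>. \<sigma> permutes (S - C)}. \<Phi> C \<sigma>)
          \<le> fact (card C - 1) * fact (n - card C) * (\<Sum>i=1..r. real i * real (wq q k (card C) choose i) * B (r - i))"
      proof -
        have "fact (card C - 1) * (\<Sum>\<sigma>\<in>{\<sigma>. \<sigma> permutes (S - C)}. \<Phi> C \<sigma>) \<le> fact (card C - 1) * (fact (n - card C) * (\<Sum>i=1..r. real i * real (wq q k (card C) choose i) * B (r - i)))"
          by (rule mult_left_mono[OF le]) simp
        then show ?thesis unfolding nc by (simp only: mult.assoc)
      qed
    qed
    also have "\<dots> = (\<Sum>L\<in>{1..n}. fact n / real L * (\<Sum>i=1..r. real i * real (wq q k L choose i) * B (r - i)))"
    proof -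
      define h where "h L = (if L = 0 then 0 else fact (L - 1) * fact (n - L) *
            (\<Sum>i=1..r. real i * real (wq q k L choose i) * B (r - i)))" for L
      have "(\<Sum>C\<in>{C. C \<subseteq> S \<and> C \<noteq> {}}. fact (card C - 1) * fact (n - card C) *
            (\<Sum>i=1..r. real i * real (wq q k (card C) choose i) * B (r - i)))
          = (\<Sum>C\<in>{C. C \<subseteq> S \<and> C \<noteq> {}}. h (card C))"
      proof (rule sum.cong[OF refl])
        fix C assume "C \<in> {C. C \<subseteq> S \<and> C \<noteq> {}}"
        then have "card C \<noteq> 0" using finS finite_subset by fastforce
        then show "fact (card C - 1) * fact (n - card C) *
            (\<Sum>i=1..r. real i * real (wq q k (card C) choose i) * B (r - i)) = h (card C)"
          by (simp add: h_def)
      qed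
      also have "\<dots> = (\<Sum>C\<in>Pow S. h (card C))"
      proof (rule sum.mono_neutral_left)
        show "finite (Pow S)" using finS by simp
        show "{C. C \<subseteq> S \<and> C \<noteq> {}} \<subseteq> Pow S" by auto
        show "\<forall>C\<in>Pow S - {C. C \<subseteq> S \<and> C \<noteq> {}}. h (card C) = 0" by (auto simp: h_def)
      qed
      also have "\<dots> = (\<Sum>L\<le>n. real (n choose L) * h L)"
        using sum_pow_card[OF finS, of h] n_def by simp
      also have "\<dots> = (\<Sum>L\<in>{1..n}. real (n choose L) * h L)"
        by (rule sum.mono_neutral_right) (auto simp: h_def)
      also have "\<dots> = (\<Sum>L\<in>{1..n}. fact n / real L * (\<Sum>i=1..r. real i * real (wq q k L choose i) * B (r - i)))"
      proof (rule sum.cong[OF refl])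
        fix L assume L: "L \<in> {1..n}"
        have "real (n choose L) * (fact L * fact (n - L)) = fact n" using L binomial_fact_lemma[of L n]
          by (metis (mono_tags, lifting) atLeastAtMost_iff mult.commute of_nat_fact of_nat_mult)
        moreover have "(fact L :: real) = real L * fact (L - 1)" using L by (simp add: fact_reduce)
        ultimately have "real (n choose L) * fact (L - 1) * fact (n - L) = fact n / real L"
          using L by (simp add: field_simps)
        moreover have "real (n choose L) * h L = (real (n choose L) * fact (L - 1) * fact (n - L)) * (\<Sum>i=1..r. real i * real (wq q k L choose i) * B (r - i))"
          using L by (simp add: h_def mult_ac)
        ultimately show "real (n choose L) * h L = fact n / real L * (\<Sum>i=1..r. real i * real (wq q k L choose i) * B (r - i))"
          by simp
      qed
      finally show ?thesis .
    qed
    also have "\<dots> = fact n * (\<Sum>i=1..r. real i * B (r - i) * (\<Sum>L\<in>{1..n}. real (wq q k L choose i) / real L))"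
    proof -
      have "(\<Sum>L\<in>{1..n}. fact n / real L * (\<Sum>i=1..r. real i * real (wq q k L choose i) * B (r - i)))
          = (\<Sum>L\<in>{1..n}. \<Sum>i=1..r. fact n * (real i * B (r - i) * (real (wq q k L choose i) / real L)))"
        by (rule sum.cong[OF refl]) (simp add: sum_distrib_left field_simps)
      also have "\<dots> = (\<Sum>i=1..r. \<Sum>L\<in>{1..n}. fact n * (real i * B (r - i) * (real (wq q k L choose i) / real L)))"
        by (rule sum.swap)
      also have "\<dots> = fact n * (\<Sum>i=1..r. real i * B (r - i) * (\<Sum>L\<in>{1..n}. real (wq q k L choose i) / real L))"
        by (simp add: sum_distrib_left)
      finally show ?thesis .
    qed
    also have "\<dots> \<le> fact n * (\<Sum>i=1..r. real i * B (r - i) * pp q k i)"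
      by (intro mult_left_mono sum_mono) (use pp_ge[OF q] Bnn in \<open>auto intro!: mult_left_mono\<close>)
    also have "\<dots> \<le> fact n * (real r * B r)"
      using rec[OF r1 less.prems(1)] by (intro mult_left_mono) (simp_all add: mult_ac)
    finally have "real r * (\<Sum>\<pi>\<in>{\<pi>. \<pi> permutes S}. real (card (Ys q k S \<pi>) choose r)) \<le> real r * (fact n * B r)"
      by (simp add: mult_ac)
    then show ?thesis using r1 n_def by simp
  qed
qed



lemma div_gcd_dvd:
  fixes L q m :: nat
  assumes "L > 0" "L dvd q * m"
  shows "L div gcd L q dvd m"
proof -
  define g where "g = gcd L q"
  have gpos: "g > 0" using assms g_def by simp
  have "L = g * (L div g)" "q * m = g * ((q div g) * m)" using g_def by simp_all
  then have "g * (L div g) dvd g * ((q div g) * m)" using assms by metis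
  then have "L div g dvd (q div g) * m" using gpos by simp
  moreover have "coprime (L div g) (q div g)" using g_def assms by (simp add: div_gcd_coprime)
  ultimately show ?thesis using coprime_dvd_mult_right_iff g_def by blast
qed

definition bb :: "nat \<Rightarrow> nat \<Rightarrow> real" where
  "bb q t = (\<Sum>d\<in>{d. d dvd q}. real (d choose t) / real d)"

definition Hs :: "nat \<Rightarrow> real" where
  "Hs k = (\<Sum>m\<in>{1..k}. 1 / real m)"

lemma Hs_le: "Hs k \<le> (real k + 1) / 2"
proof (induction k)
  case 0 then show ?case by (simp add: Hs_def)
next
  case (Suc k)
  have eq: "Hs (Suc k) = Hs k + 1 / real (Suc k)" by (simp add: Hs_def)
  show ?case
  proof (cases "k = 0")
    case True then show ?thesis by (simp add: Hs_def)
  next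
    case False
    then have h: "1 / real (Suc k) \<le> 1 / 2" by (simp add: field_simps)
    have "Hs (Suc k) \<le> (real k + 1) / 2 + 1 / 2" using eq Suc.IH h by linarith
    moreover have "(real k + 1) / 2 + 1 / 2 = (real (Suc k) + 1) / 2" by (simp add: field_simps)
    ultimately show ?thesis by simp
  qed
qed

lemma pp_le:
  assumes q: "q \<ge> 1" and t: "t \<ge> 1"
  shows "pp q k t \<le> Hs k * bb q t"
proof -
  define A where "A = {L \<in> {1..k*q}. wq q k L \<noteq> 0}"
  define D where "D = {d. d dvd q}"
  have finD: "finite D" using q D_def by simp
  define \<phi> where "\<phi> L = (gcd L q, L div gcd L q)" for L
  define f where "f x = real (fst x choose t) / (real (fst x) * real (snd x))" for x :: "nat \<times> nat"
  have "pp q k t = (\<Sum>L\<in>A. real (wq q k L choose t) / real L)"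
    unfolding pp_def A_def by (rule sum.mono_neutral_right) (use t in auto)
  also have "\<dots> = (\<Sum>L\<in>A. f (\<phi> L))"
  proof (rule sum.cong[OF refl])
    fix L assume "L \<in> A"
    then have L: "L \<ge> 1" "wq q k L = gcd L q" by (auto simp: A_def wq_def split: if_splits)
    have "real (gcd L q) * real (L div gcd L q) = real L" by (metis dvd_mult_div_cancel gcd_dvd1 of_nat_mult)
    then show "real (wq q k L choose t) / real L = f (\<phi> L)" using L by (simp add: f_def \<phi>_def)
  qed
  also have "\<dots> = (\<Sum>x\<in>\<phi> ` A. f x)"
  proof (rule sum.reindex[symmetric, unfolded comp_def])
    show "inj_on \<phi> A"
    proof (rule inj_onI)
      fix L1 L2 assume "\<phi> L1 = \<phi> L2"
      then have "gcd L1 q = gcd L2 q" "L1 div gcd L1 q = L2 div gcd L2 q" by (auto simp: \<phi>_def)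
      then show "L1 = L2" by (metis dvd_mult_div_cancel gcd_dvd1)
    qed
  qed
  also have "\<dots> \<le> (\<Sum>x\<in>D \<times> {1..k}. f x)"
  proof (rule sum_mono2)
    show "finite (D \<times> {1..k})" using finD by simp
    show "\<phi> ` A \<subseteq> D \<times> {1..k}"
    proof
      fix x assume "x \<in> \<phi> ` A"
      then obtain L where L: "L \<in> A" "x = \<phi> L" by auto
      then have L1: "L \<ge> 1" by (auto simp: A_def)
      obtain m where m: "m \<in> {1..k}" "L dvd q * m" using L by (auto simp: A_def wq_def split: if_splits)
      have dv: "L div gcd L q dvd m" using div_gcd_dvd[of L q m] L1 m by simp
      have "L div gcd L q \<le> m" using dv m by (simp add: dvd_imp_le)
      moreover have "L div gcd L q \<ge> 1"
      proof -
        have "gcd L q \<le> L" "gcd L q > 0" using L1 by (simp_all add: gcd_le1_nat)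
        then have "L div gcd L q > 0" by (simp add: div_greater_zero_iff)
        then show ?thesis by simp
      qed
      ultimately show "x \<in> D \<times> {1..k}" using L m by (auto simp: \<phi>_def D_def)
    qed
    show "\<And>x. x \<in> D \<times> {1..k} - \<phi> ` A \<Longrightarrow> 0 \<le> f x" by (auto simp: f_def)
  qed
  also have "\<dots> = (\<Sum>d\<in>D. \<Sum>m\<in>{1..k}. real (d choose t) / real d * (1 / real m))"
    by (simp add: sum.cartesian_product f_def split_def)
  also have "\<dots> = bb q t * Hs k"
    by (simp only: bb_def Hs_def D_def sum_product)
  finally show ?thesis by (simp add: mult.commute)
qed

lemma divisors_pos:
  fixes q d :: nat
  assumes "q \<ge> 1" "d dvd q" shows "d \<ge> 1"
proof (rule ccontr)
  assume "\<not> d \<ge> 1" then have "d = 0" by simp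
  then show False using assms by simp
qed

lemma bb1:
  assumes q: "q \<ge> 1" shows "bb q 1 = real (card {d. d dvd q})"
proof -
  have "bb q 1 = (\<Sum>d\<in>{d. d dvd q}. (1::real))"
    unfolding bb_def
  proof (rule sum.cong[OF refl])
    fix d assume "d \<in> {d. d dvd q}"
    then have "d \<ge> 1" using divisors_pos[OF q] by auto
    then show "real (d choose 1) / real d = 1" by simp
  qed
  then show ?thesis by simp
qed

lemma bb2: "(q::nat) \<ge> 1 \<Longrightarrow> bb q 2 \<le> (\<Sum>d\<in>{d. d dvd q}. real d) / 2"
proof -
  assume q: "q \<ge> 1"
  have "bb q 2 \<le> (\<Sum>d\<in>{d. d dvd q}. real d / 2)"
    unfolding bb_def
  proof (rule sum_mono)
    fix d assume "d \<in> {d. d dvd q}"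
    then have d: "d \<ge> 1" using divisors_pos q by auto
    have "Suc 1 * (d choose Suc 1) = d * ((d - 1) choose 1)" by (rule binomial_absorption)
    then have "2 * (d choose 2) = d * (d - 1)" by (simp add: numeral_2_eq_2)
    then have "2 * real (d choose 2) = real d * (real d - 1)" using d
      by (metis of_nat_1 of_nat_diff of_nat_mult of_nat_numeral)
    then have "real (d choose 2) = real d * (real d - 1) / 2" by simp
    then show "real (d choose 2) / real d \<le> real d / 2" using d by (simp add: field_simps)
  qed
  then show ?thesis by (simp add: sum_divide_distrib)
qed

lemma sum_inv_sq: "(\<Sum>e\<in>{1..n}. 1 / (real e)^2) \<le> 2 - 1 / real (max n 1)"
proof (induction n)
  case 0 then show ?case by simp
next
  case (Suc n)
  show ?case
  proof (cases "n = 0")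
    case True then show ?thesis by simp
  next
    case False
    have "(\<Sum>e\<in>{1..Suc n}. 1 / (real e)^2) = (\<Sum>e\<in>{1..n}. 1 / (real e)^2) + 1 / (real (Suc n))^2"
      by simp
    also have "\<dots> \<le> 2 - 1 / real n + 1 / (real (Suc n))^2" using Suc False by simp
    also have "\<dots> \<le> 2 - 1 / real (Suc n)"
    proof -
      have "1 / real n - 1 / real (Suc n) = 1 / (real n * real (Suc n))"
        using False by (simp add: field_simps)
      moreover have "1 / (real (Suc n))^2 \<le> 1 / (real n * real (Suc n))"
        by (rule divide_left_mono) (use False in \<open>auto simp: power2_eq_square intro!: mult_pos_pos\<close>)
      ultimately have "1 / (real (Suc n))^2 \<le> 1 / real n - 1 / real (Suc n)" by simp
      then show ?thesis by simp
    qed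
    finally show ?thesis by simp
  qed
qed

lemma sum_div_pow:
  fixes q t :: nat
  assumes q: "q \<ge> 1" and t: "t \<ge> 3"
  shows "(\<Sum>d\<in>{d. d dvd q}. (real d)^(t - 1)) \<le> 2 * (real q)^(t - 1)"
proof -
  define D where "D = {d. d dvd q}"
  have finD: "finite D" using q D_def by simp
  have "(\<Sum>d\<in>D. (real d)^(t - 1)) = (\<Sum>e\<in>D. (real (q div e))^(t - 1))"
  proof (rule sum.reindex_bij_betw[symmetric])
    show "bij_betw (\<lambda>e. q div e) D D"
    proof (rule bij_betw_byWitness[where f'="\<lambda>e. q div e"])
      have *: "q div (q div e) = e \<and> (q div e) dvd q" if e: "e dvd q" for e
      proof -
        obtain x where x: "q = e * x" using e by blast
        have "e \<noteq> 0" "x \<noteq> 0" using x q by auto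
        then show ?thesis using x by simp
      qed
      show "\<forall>a\<in>D. q div (q div a) = a" using * D_def by auto
      show "\<forall>a'\<in>D. q div (q div a') = a'" using * D_def by auto
      show "(\<lambda>e. q div e) ` D \<subseteq> D" using * D_def by auto
      show "(\<lambda>e. q div e) ` D \<subseteq> D" using * D_def by auto
    qed
  qed
  also have "\<dots> \<le> (\<Sum>e\<in>D. (real q)^(t - 1) * (1 / (real e)^2))"
  proof (rule sum_mono)
    fix e assume "e \<in> D"
    then have e: "e dvd q" "e \<ge> 1" using divisors_pos q D_def by auto
    have "real (q div e) = real q / real e" using e by (simp add: real_of_nat_div)
    then have "(real (q div e))^(t - 1) = (real q)^(t - 1) / (real e)^(t - 1)" by (simp add: power_divide)
    also have "\<dots> \<le> (real q)^(t - 1) / (real e)^2"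
    proof (rule divide_left_mono)
      show "(real e)^2 \<le> (real e)^(t - 1)" using e t by (intro power_increasing) auto
    qed (use e in auto)
    finally show "(real (q div e))^(t - 1) \<le> (real q)^(t - 1) * (1 / (real e)^2)" by simp
  qed
  also have "\<dots> = (real q)^(t - 1) * (\<Sum>e\<in>D. 1 / (real e)^2)" by (simp add: sum_distrib_left)
  also have "\<dots> \<le> (real q)^(t - 1) * 2"
  proof (rule mult_left_mono)
    have "(\<Sum>e\<in>D. 1 / (real e)^2) \<le> (\<Sum>e\<in>{1..q}. 1 / (real e)^2)"
      by (rule sum_mono2) (use divisors_pos q in \<open>auto simp: D_def dvd_imp_le\<close>)
    also have "\<dots> \<le> 2" using sum_inv_sq[of q] by (smt (verit) divide_nonneg_nonneg of_nat_0_le_iff)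
    finally show "(\<Sum>e\<in>D. 1 / (real e)^2) \<le> 2" .
  qed simp
  finally show ?thesis using D_def by (simp add: mult.commute)
qed

lemma bb_ge3:
  assumes q: "q \<ge> 1" and t: "t \<ge> 3"
  shows "bb q t \<le> 2 * (real q)^(t - 1) / fact t"
proof -
  have "bb q t \<le> (\<Sum>d\<in>{d. d dvd q}. (real d)^(t - 1) / fact t)"
    unfolding bb_def
  proof (rule sum_mono)
    fix d assume "d \<in> {d. d dvd q}"
    then have d: "d \<ge> 1" using divisors_pos q by auto
    have "real (d choose t) * fact t \<le> (real d)^t"
      using binomial_fact_pow[of d t] by (metis of_nat_fact of_nat_le_iff of_nat_mult of_nat_power)
    then have "real (d choose t) \<le> (real d)^t / fact t" by (simp add: field_simps)
    then have "real (d choose t) / real d \<le> (real d)^t / fact t / real d" by (rule divide_right_mono) (use d in auto)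
    also have "(real d)^t / fact t / real d = (real d)^(t - 1) / fact t"
    proof -
      obtain t' where t': "t = Suc t'" using t by (cases t) auto
      have "(real d)^t = real d * (real d)^(t - 1)" using t' by simp
      then show ?thesis using d by simp
    qed
    finally show "real (d choose t) / real d \<le> (real d)^(t - 1) / fact t" .
  qed
  also have "\<dots> = (\<Sum>d\<in>{d. d dvd q}. (real d)^(t - 1)) / fact t" by (simp add: sum_divide_distrib)
  also have "\<dots> \<le> 2 * (real q)^(t - 1) / fact t"
    using sum_div_pow[OF q t] by (simp add: divide_right_mono)
  finally show ?thesis .
qed

lemma sigma0_sq:
  fixes q :: nat
  assumes q: "q \<ge> 1"
  shows "(real (card {d. d dvd q}))^2 \<le> 4 * real q"
proof -
  define D where "D = {d. d dvd q}"
  define D1 where "D1 = {d \<in> D. d * d \<le> q}"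
  define D2 where "D2 = {d \<in> D. \<not> d * d \<le> q}"
  have finD: "finite D" using q D_def by simp
  have D12: "D = D1 \<union> D2" "D1 \<inter> D2 = {}" by (auto simp: D1_def D2_def)
  have fin1: "finite D1" "finite D2" using finD by (auto simp: D1_def D2_def)
  have "card D2 \<le> card D1"
  proof (rule card_inj_on_le[where f="\<lambda>d. q div d"])
    show "inj_on (\<lambda>d. q div d) D2"
    proof (rule inj_onI)
      fix d1 d2 assume d: "d1 \<in> D2" "d2 \<in> D2" "q div d1 = q div d2"
      obtain x1 where x1: "q = d1 * x1" using d by (auto simp: D2_def D_def)
      obtain x2 where x2: "q = d2 * x2" using d by (auto simp: D2_def D_def)
      have "d1 \<noteq> 0" using x1 q by (rule_tac ccontr) simp
      have "d2 \<noteq> 0" using x2 q by (rule_tac ccontr) simp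
      have "x1 \<noteq> 0" using x1 q by (rule_tac ccontr) simp
      have "q div d1 = x1" using x1 \<open>d1 \<noteq> 0\<close> by simp
      moreover have "q div d2 = x2" using x2 \<open>d2 \<noteq> 0\<close> by simp
      ultimately have "x1 = x2" using d by simp
      then show "d1 = d2" using x1 x2 \<open>x1 \<noteq> 0\<close> by simp
    qed
    show "(\<lambda>d. q div d) ` D2 \<subseteq> D1"
    proof
      fix x assume "x \<in> (\<lambda>d. q div d) ` D2"
      then obtain d where d: "d \<in> D2" "x = q div d" by auto
      then have dq: "d dvd q" "q < d * d" by (auto simp: D2_def D_def)
      have xd: "x * d = q" using d dq by simp
      have "x * x \<le> q"
      proof (rule ccontr)
        assume nx: "\<not> x * x \<le> q"
        then have "q < x * x" by simp
        moreover then have "0 < x" by (cases x) auto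
        ultimately have "q * q < (x * x) * (d * d)" using dq by (intro mult_strict_mono) auto
        also have "(x * x) * (d * d) = q * q" using xd by (metis mult.assoc mult.commute)
        finally show False by simp
      qed
      then show "x \<in> D1" using xd by (auto simp: D1_def D_def)
    qed
    show "finite D1" by fact
  qed
  have c1: "card D1 * card D1 \<le> q"
  proof (cases "D1 = {}")
    case True then show ?thesis by simp
  next
    case False
    define M where "M = Max D1"
    have MD: "M \<in> D1" using False fin1 M_def by simp
    have "D1 \<subseteq> {1..M}" using fin1 M_def divisors_pos q by (auto simp: D1_def D_def)
    then have "card D1 \<le> M" using card_mono[of "{1..M}" D1] by simp
    then have "card D1 * card D1 \<le> M * M" by (simp add: mult_le_mono)
    also have "\<dots> \<le> q" using MD by (simp add: D1_def)
    finally show ?thesis .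
  qed
  have "card D = card D1 + card D2" using D12 fin1 card_Un_disjoint by metis
  then have "card D \<le> 2 * card D1" using \<open>card D2 \<le> card D1\<close> by simp
  then have "card D * card D \<le> (2 * card D1) * (2 * card D1)" by (intro mult_le_mono)
  also have "\<dots> = 4 * (card D1 * card D1)" by simp
  also have "\<dots> \<le> 4 * q" using c1 by simp
  finally have "card D * card D \<le> 4 * q" .
  then have "real (card D * card D) \<le> real (4 * q)" by (simp only: of_nat_le_iff)
  then show ?thesis using D_def by (simp add: power2_eq_square)
qed

lemma sigma1_le: "(q::nat) \<ge> 1 \<Longrightarrow> (\<Sum>d\<in>{d. d dvd q}. real d) \<le> real q * real (card {d. d dvd q})"
proof -
  assume q: "q \<ge> 1"
  have "(\<Sum>d\<in>{d. d dvd q}. real d) \<le> (\<Sum>d\<in>{d. d dvd q}. real q)"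
    by (rule sum_mono) (use q in \<open>auto simp: dvd_imp_le\<close>)
  then show ?thesis by (simp add: mult.commute)
qed

lemma sigma1_ge: "(q::nat) \<ge> 1 \<Longrightarrow> real q \<le> (\<Sum>d\<in>{d. d dvd q}. real d)"
proof -
  assume q: "q \<ge> 1"
  have "finite {d. d dvd q}" using q by simp
  then show ?thesis using member_le_sum[of q "{d. d dvd q}" real] by auto
qed

lemma sigma0_le_sigma1: "(q::nat) \<ge> 1 \<Longrightarrow> real (card {d. d dvd q}) \<le> (\<Sum>d\<in>{d. d dvd q}. real d)"
proof -
  assume q: "q \<ge> 1"
  have "(\<Sum>d\<in>{d. d dvd q}. 1::real) \<le> (\<Sum>d\<in>{d. d dvd q}. real d)"
    by (rule sum_mono) (use divisors_pos q in auto)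
  then show ?thesis by simp
qed

lemma sigma0_ge: "(q::nat) \<ge> 1 \<Longrightarrow> 1 \<le> real (card {d. d dvd q})"
proof -
  assume q: "q \<ge> 1"
  have "{1::nat} \<subseteq> {d. d dvd q}" by auto
  then have "card {1::nat} \<le> card {d. d dvd q}" using q by (intro card_mono) auto
  then show ?thesis by simp
qed

lemma divisor_sigma0:
  assumes q: "q \<ge> 1" shows "divisor_sigma 0 q = real (card {d. d dvd q})"
proof -
  have "divisor_sigma 0 q = (\<Sum>d\<in>{d. d dvd q}. (1::real))"
    unfolding divisor_sigma_def
  proof (rule sum.cong[OF refl])
    fix d assume "d \<in> {d. d dvd q}"
    then have "d \<ge> 1" using divisors_pos[OF q] by auto
    then show "real d powr 0 = 1" by simp
  qed
  then show ?thesis by simp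
qed

lemma divisor_sigma1: "divisor_sigma 1 q = (\<Sum>d\<in>{d. d dvd q}. real d)"
  unfolding divisor_sigma_def by simp



definition BB :: "real \<Rightarrow> real \<Rightarrow> real \<Rightarrow> real \<Rightarrow> nat \<Rightarrow> real" where
  "BB H Q s s1 m = (if m = 0 then 1 else if m = 1 then H * s else if m = 2 then (H^2 * s^2 + H * s1) / 2
     else 200 * H^3 * Q^(m - 1) / fact m)"

lemma sum_delta_le:
  fixes X :: real and r c :: nat
  assumes "X \<ge> 0"
  shows "(\<Sum>i=1..r. if i = c then X else 0) \<le> X"
proof -
  have "(\<Sum>i=1..r. if i = c then X else 0) = (if c \<in> {1..r} then X else 0)"
    by (rule sum.delta) simp
  then show ?thesis using assms by simp
qed

lemma sum_choose_shift: "(\<Sum>i=1..r. real ((r - 1) choose (i - 1))) = 2 ^ (r - 1)" if r1: "r \<ge> 1"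
proof -
  obtain m where m: "r = Suc m" using r1 by (cases r) auto
  have "(\<Sum>i=1..r. real ((r - 1) choose (i - 1))) = (\<Sum>i=Suc 0..Suc m. real (m choose (i - 1)))" using m by simp
  also have "\<dots> = (\<Sum>i=0..m. real (m choose i))" by (subst sum.shift_bounds_cl_Suc_ivl) simp
  also have "\<dots> = real (\<Sum>i\<le>m. m choose i)" by (simp add: atLeast0AtMost)
  also have "\<dots> = 2 ^ m" by (simp add: choose_row_sum)
  finally show ?thesis using m by simp
qed

lemma rec_bound:
  fixes H Q s s1 :: real and p :: "nat \<Rightarrow> real" and r :: nat
  assumes H: "H \<ge> 3/2" and Q: "Q \<ge> 1" and s: "s \<ge> 1" "s^2 \<le> 4 * Q" and s1: "s1 \<le> Q * s" "s1 \<ge> 0"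
    and p0: "\<And>i. p i \<ge> 0" and p1: "p 1 \<le> H * s" and p2: "p 2 \<le> H * s1 / 2"
    and p3: "\<And>i. i \<ge> 3 \<Longrightarrow> p i \<le> 2 * H * Q^(i - 1) / fact i"
    and r: "r \<ge> 3" and C1: "H * 2^r \<le> 3/4 * Q" and C2: "H * s * (real r)^2 \<le> Q / 20"
  shows "(\<Sum>i=1..r. real i * p i * BB H Q s s1 (r - i)) \<le> real r * BB H Q s s1 r"
proof -
  obtain m where m: "r = m + 3" using r by (metis add.commute le_Suc_ex)
  define Y where "Y = 200 * H^3"
  have Hpos: "H > 0" using H by simp
  have Qpos: "Q > 0" using Q by simp
  have Ypos: "Y > 0" using Hpos Y_def by simp
  define A where "A i = (if i = 1 then H * s else if i = 2 then H * Q * s else 2 * H * Q^(i - 1) / fact (i - 1))" for i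
  define U where "U k = (if k = 0 then 1 else if k = 1 then H * s else if k = 2 then Q * (4 * H^2 + H * s) / 2
     else Y * Q^(k - 1) / fact k)" for k
  have A0: "A i \<ge> 0" for i using Hpos Qpos s by (auto simp: A_def)
  have U0: "U k \<ge> 0" for k using Hpos Qpos s Ypos by (auto simp: U_def)
  have iA: "real i * p i \<le> A i" if i1: "i \<ge> 1" for i
  proof -
    consider "i = 1" | "i = 2" | "i \<ge> 3" using i1 by linarith
    then show ?thesis
    proof cases
      case 1 then show ?thesis using p1 by (simp add: A_def)
    next
      case 2
      have "real i * p i \<le> 2 * (H * s1 / 2)" using p2 2 by simp
      also have "\<dots> \<le> H * Q * s" using s1 Hpos by (simp add: mult_left_mono mult.assoc)
      finally show ?thesis using 2 by (simp add: A_def)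
    next
      case 3
      have "real i * p i \<le> real i * (2 * H * Q^(i - 1) / fact i)" using p3[OF 3] by (intro mult_left_mono) auto
      also have "\<dots> = 2 * H * Q^(i - 1) / fact (i - 1)"
        using 3 by (simp add: fact_reduce[of i] field_simps)
      finally show ?thesis using 3 by (simp add: A_def)
    qed
  qed
  have BU: "BB H Q s s1 k \<le> U k" for k
  proof -
    have "H^2 * s^2 + H * s1 \<le> H^2 * (4 * Q) + H * (Q * s)"
      using s s1 Hpos by (intro add_mono mult_left_mono) auto
    then show ?thesis by (auto simp: BB_def U_def Y_def field_simps)
  qed
  have B0: "BB H Q s s1 k \<ge> 0" for k using Hpos Qpos s s1 by (auto simp: BB_def)
  have termb: "real i * p i * BB H Q s s1 (r - i) \<le> A i * U (r - i)" if "i \<ge> 1" for i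
    using iA[OF that] BU[of "r - i"] B0[of "r - i"] A0[of i] p0[of i]
    by (meson mult_mono order_trans mult_nonneg_nonneg of_nat_0_le_iff)
  define K where "K = Q^(r - 1) / fact (r - 1)"
  have Kpos: "K > 0" using Qpos by (simp add: K_def)
  define main where "main i = 2 * H * Y * Q^(r - 2) * real ((r - 1) choose (i - 1)) / fact (r - 1)" for i
  define x1 where "x1 = (if r \<ge> 4 then H * s * Y / Q else H * s * (4 * H^2 + H * s) / Q)"
  define x2 where "x2 = (if r \<ge> 5 then H * s * Y * (real r - 1) / Q else if r = 4 then 3 * H * s * (4 * H^2 + H * s) / Q
     else 2 * H^2 * s^2 / Q)"
  define x3 where "x3 = 2 * H"
  define x4 where "x4 = (if r \<ge> 4 then 2 * H^2 * s * (real r - 1) / Q else 0)"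
  define x5 where "x5 = (if r \<ge> 5 then H * (4 * H^2 + H * s) * (real r - 1) * (real r - 2) / Q else 0)"
  have main0: "main i \<ge> 0" for i using Hpos Ypos Qpos by (simp add: main_def)
  have x0: "x1 \<ge> 0" "x2 \<ge> 0" "x3 \<ge> 0" "x4 \<ge> 0" "x5 \<ge> 0"
    using Hpos Ypos Qpos s r by (auto simp: x1_def x2_def x3_def x4_def x5_def)
  have Gi: "A i * U (r - i) \<le> main i + (if i = 1 then K * x1 else 0) + (if i = 2 then K * x2 else 0)
      + (if i = r then K * x3 else 0) + (if i = r - 1 then K * x4 else 0) + (if i = r - 2 then K * x5 else 0)"
    if iin: "i \<in> {1..r}" for i
  proof -
    define R where "R = (if i = 1 then K * x1 else 0) + (if i = 2 then K * x2 else 0)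
      + (if i = r then K * x3 else 0) + (if i = r - 1 then K * x4 else 0) + (if i = r - 2 then K * x5 else 0)"
    have T0: "(if i = 1 then K * x1 else 0) \<ge> 0" "(if i = 2 then K * x2 else 0) \<ge> 0"
      "(if i = r then K * x3 else 0) \<ge> 0" "(if i = r - 1 then K * x4 else 0) \<ge> 0"
      "(if i = r - 2 then K * x5 else 0) \<ge> 0"
      using Kpos x0 by simp_all
    have R0: "R \<ge> 0" using T0 unfolding R_def by linarith
    have Kx: "(if i = 1 then K * x1 else 0) \<le> R" "(if i = 2 then K * x2 else 0) \<le> R"
      "(if i = r then K * x3 else 0) \<le> R" "(if i = r - 1 then K * x4 else 0) \<le> R"
      "(if i = r - 2 then K * x5 else 0) \<le> R"
      using T0 unfolding R_def by linarith+
    have fr: "(fact (m + 2) :: real) = real (m + 2) * fact (m + 1)" "(fact (m + 1) :: real) = real (m + 1) * fact m"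
      by (simp_all add: fact_reduce)
    have Kd: "K = Q^(m + 2) / fact (m + 2)" using m by (simp add: K_def)
    consider "3 \<le> i \<and> i + 3 \<le> r" | "i = 1" | "i = 2" | "i = r" | "i = r - 1 \<and> r \<ge> 4" | "i = r - 2 \<and> r \<ge> 5"
    proof -
      have "(3 \<le> i \<and> i + 3 \<le> r) \<or> i = 1 \<or> i = 2 \<or> i = r \<or> (i = r - 1 \<and> r \<ge> 4) \<or> (i = r - 2 \<and> r \<ge> 5)"
        using iin r by (simp; arith)
      then show thesis using that by blast
    qed
    then have "A i * U (r - i) \<le> main i + R"
    proof cases
      case 1
      then have i3: "i \<ge> 3" "r - i \<ge> 3" by auto
      have "A i * U (r - i) = (2 * H * Q^(i - 1) / fact (i - 1)) * (Y * Q^(r - i - 1) / fact (r - i))"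
      proof -
        have "r - i \<noteq> 0" "r - i \<noteq> 1" "r - i \<noteq> 2" "i \<noteq> 1" "i \<noteq> 2" using i3 by auto
        then show ?thesis by (simp add: A_def U_def)
      qed
      also have "\<dots> = 2 * H * Y * (Q^(i - 1) * Q^(r - i - 1)) / (fact (i - 1) * fact (r - i))"
        by (simp add: field_simps)
      also have "Q^(i - 1) * Q^(r - i - 1) = Q^(r - 2)"
        using i3 by (simp add: power_add[symmetric])
      also have "real ((r - 1) choose (i - 1)) = fact (r - 1) / (fact (i - 1) * fact (r - i))"
        using i3 binomial_fact[of "i - 1" "r - 1", where 'a=real] by simp
      then have "2 * H * Y * Q^(r - 2) / (fact (i - 1) * fact (r - i)) = main i"
        by (simp add: main_def field_simps)
      finally show ?thesis using R0 by simp
    next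
      case 2
      have "A i * U (r - i) = K * x1"
      proof (cases "r \<ge> 4")
        case True
        then have "U (r - i) = Y * Q^(m + 1) / fact (m + 2)" using m 2 by (simp add: U_def)
        moreover have "Q^(m + 2) = Q * Q^(m + 1)" by simp
        ultimately show ?thesis using 2 True Qpos by (simp add: A_def Kd x1_def field_simps)
      next
        case False
        then have "m = 0" using m by simp
        then show ?thesis using 2 m Qpos by (simp add: A_def U_def Kd x1_def field_simps power2_eq_square)
      qed
      then show ?thesis using Kx main0[of i] 2 by simp
    next
      case 3
      have "A i * U (r - i) = K * x2"
      proof -
        consider "r \<ge> 5" | "r = 4" | "r = 3" using r by linarith
        then show ?thesis
        proof cases
          case 1
          define m' where "m' = m - 2"
          have m': "m = m' + 2" using 1 m m'_def by simp
          define F3 where "F3 = (fact (m' + 3) :: real)"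
          define P2 where "P2 = Q^(m' + 2)"
          have F3pos: "F3 > 0" by (simp add: F3_def)
          have eA: "A i = H * Q * s" using 3 by (simp add: A_def)
          have eU: "U (r - i) = Y * P2 / F3"
          proof -
            have "r - i = m' + 3" using m m' 3 by simp
            then show ?thesis by (simp add: U_def F3_def P2_def)
          qed
          have eK: "K = Q * Q * P2 / (real (m' + 4) * F3)"
          proof -
            have ef: "(fact (m' + 4) :: real) = real (m' + 4) * fact (m' + 3)"
              using fact_reduce[of "m' + 4", where 'a=real] by (simp add: add.commute)
            have eQ: "Q^(m' + 4) = Q * Q * P2"
          proof -
            have "m' + 4 = (m' + 2) + 2" by simp
            then have "Q^(m' + 4) = Q^(m' + 2) * Q^2" by (metis power_add)
            then show ?thesis by (simp add: P2_def power2_eq_square)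
          qed
            have "m + 2 = m' + 4" using m' by simp
            then have "K = Q^(m' + 4) / fact (m' + 4)" using Kd by (simp only:)
            then show ?thesis by (simp only: ef eQ F3_def)
          qed
          have ex: "x2 = H * s * Y * real (m' + 4) / Q" using 1 m m' by (simp add: x2_def)
          have m4: "real (m' + 4) > 0" by simp
          show ?thesis unfolding eA eU eK ex using Qpos F3pos m4 by (simp add: field_simps del: of_nat_add)
        next
          case 2
          then have "m = 1" using m by simp
          then show ?thesis using 3 2 m Qpos by (simp add: A_def U_def Kd x2_def field_simps power2_eq_square
              power3_eq_cube)
        next
          case 3
          then have "m = 0" using m by simp
          then show ?thesis using \<open>i = 2\<close> 3 m Qpos by (simp add: A_def U_def Kd x2_def field_simps power2_eq_square)
        qed
      qed
      then show ?thesis using Kx main0[of i] 3 by simp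
    next
      case 4
      have "A i * U (r - i) = K * x3"
        using 4 m by (simp add: A_def U_def K_def x3_def field_simps)
      then show ?thesis using Kx main0[of i] 4 by simp
    next
      case 5
      have "A i * U (r - i) = K * x4"
      proof -
        define F1 where "F1 = (fact (m + 1) :: real)"
        define P1 where "P1 = Q^(m + 1)"
        have F1pos: "F1 > 0" by (simp add: F1_def)
        have eA: "A i = 2 * H * P1 / F1"
        proof -
          have "i - 1 = m + 1" "i \<noteq> 1" "i \<noteq> 2" using 5 m by simp_all
          then show ?thesis by (simp add: A_def F1_def P1_def)
        qed
        have eU: "U (r - i) = H * s" using 5 m by (simp add: U_def)
        define c where "c = real (m + 2)"
        have eK: "K = Q * P1 / (c * F1)"
        proof -
          have "Q^(m + 2) = Q * P1" by (simp add: P1_def)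
          then show ?thesis unfolding Kd c_def by (simp only: fr(1) F1_def)
        qed
        have ex: "x4 = 2 * H^2 * s * c / Q" using 5 m by (simp add: x4_def c_def)
        have m2: "c > 0" by (simp add: c_def)
        show ?thesis unfolding eA eU eK ex using Qpos F1pos m2 by (simp add: field_simps power2_eq_square)
      qed
      then show ?thesis using Kx main0[of i] 5 by simp
    next
      case 6
      define m' where "m' = m - 2"
      have m': "m = m' + 2" using 6 m m'_def by linarith
      have "A i * U (r - i) = K * x5"
      proof -
        define F2 where "F2 = (fact (m' + 2) :: real)"
        define P2 where "P2 = Q^(m' + 2)"
        have F2pos: "F2 > 0" by (simp add: F2_def)
        have eA: "A i = 2 * H * P2 / F2"
        proof -
          have "i = m' + 3" "i - 1 = m' + 2" using 6 m m' by simp_all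
          then show ?thesis by (simp add: A_def F2_def P2_def)
        qed
        have eU: "U (r - i) = Q * (4 * H^2 + H * s) / 2"
        proof -
          have "r - i = 2" using 6 m by simp
          then show ?thesis by (simp add: U_def)
        qed
        have eK: "K = Q * Q * P2 / (real (m' + 4) * (real (m' + 3) * F2))"
        proof -
          have ef: "(fact (m' + 4) :: real) = real (m' + 4) * (real (m' + 3) * fact (m' + 2))"
            using fact_reduce[of "m' + 4", where 'a=real] fact_reduce[of "m' + 3", where 'a=real] by (simp add: add.commute)
          have eQ: "Q^(m' + 4) = Q * Q * P2"
          proof -
            have "m' + 4 = (m' + 2) + 2" by simp
            then have "Q^(m' + 4) = Q^(m' + 2) * Q^2" by (metis power_add)
            then show ?thesis by (simp add: P2_def power2_eq_square)
          qed
          have "m + 2 = m' + 4" using m' by simp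
          then have "K = Q^(m' + 4) / fact (m' + 4)" using Kd by (simp only:)
          then show ?thesis by (simp only: ef eQ F2_def)
        qed
        have ex: "x5 = H * (4 * H^2 + H * s) * real (m' + 4) * real (m' + 3) / Q"
          using 6 m m' by (simp add: x5_def algebra_simps)
        have m4: "real (m' + 4) > 0" "real (m' + 3) > 0" by simp_all
        show ?thesis unfolding eA eU eK ex using Qpos F2pos m4 by (simp add: field_simps del: of_nat_add)
      qed
      then show ?thesis using Kx main0[of i] 6 by simp
    qed
    then show ?thesis by (simp add: R_def add.assoc)
  qed
  have "(\<Sum>i=1..r. real i * p i * BB H Q s s1 (r - i)) \<le> (\<Sum>i=1..r. A i * U (r - i))"
    by (rule sum_mono) (use termb in auto)
  also have "\<dots> \<le> (\<Sum>i=1..r. main i + (if i = 1 then K * x1 else 0) + (if i = 2 then K * x2 else 0)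
      + (if i = r then K * x3 else 0) + (if i = r - 1 then K * x4 else 0) + (if i = r - 2 then K * x5 else 0))"
    by (rule sum_mono) (rule Gi)
  also have "\<dots> = (\<Sum>i=1..r. main i) + (\<Sum>i=1..r. if i = 1 then K * x1 else 0) + (\<Sum>i=1..r. if i = 2 then K * x2 else 0)
      + (\<Sum>i=1..r. if i = r then K * x3 else 0) + (\<Sum>i=1..r. if i = r - 1 then K * x4 else 0)
      + (\<Sum>i=1..r. if i = r - 2 then K * x5 else 0)"
    by (simp only: sum.distrib)
  also have "\<dots> \<le> (\<Sum>i=1..r. main i) + K * x1 + K * x2 + K * x3 + K * x4 + K * x5"
    using Kpos x0 by (intro add_mono sum_delta_le order_refl) auto
  also have "(\<Sum>i=1..r. main i) = K * (H * Y * 2^r / Q)"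
  proof -
    have "(\<Sum>i=1..r. main i) = 2 * H * Y * Q^(r - 2) / fact (r - 1) * (\<Sum>i=1..r. real ((r - 1) choose (i - 1)))"
      by (simp add: main_def sum_distrib_left sum_divide_distrib)
    also have "\<dots> = 2 * H * Y * Q^(r - 2) / fact (r - 1) * 2^(r - 1)" using sum_choose_shift[of r] r by simp
    also have "\<dots> = K * (H * Y * 2^r / Q)"
    proof -
      have "Q^(r - 1) = Q * Q^(r - 2)" "(2::real)^r = 2 * 2^(r - 1)" using m by (simp_all add: power_add)
      then show ?thesis using Qpos by (simp add: K_def field_simps)
    qed
    finally show ?thesis .
  qed
  also have "K * (H * Y * 2^r / Q) + K * x1 + K * x2 + K * x3 + K * x4 + K * x5 = K * (H * Y * 2^r / Q + x1 + x2 + x3 + x4 + x5)"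
    by (simp add: algebra_simps)
  also have "\<dots> \<le> K * Y"
  proof (rule mult_left_mono)
    show "H * Y * 2^r / Q + x1 + x2 + x3 + x4 + x5 \<le> Y"
    proof -
      define a where "a = H * s / Q"
      define b where "b = s^2 / Q"
      have a0: "a \<ge> 0" using Hpos s Qpos by (simp add: a_def)
      have r3: "real r \<ge> 3" using r by simp
      have "(3::real)^2 \<le> (real r)^2" by (rule power_mono) (use r3 in auto)
      then have rr: "(real r)^2 \<ge> 9" by simp
      have rsq: "real r * 1 \<le> real r * real r" by (rule mult_left_mono) (use r3 in auto)
      have "1 * 1 \<le> H * s" by (rule mult_mono) (use H s in auto)
      then have Hs1: "H * s \<ge> 1" by simp
      have a1: "a \<le> 1/180"
      proof -
        have "H * s * 9 \<le> H * s * (real r)^2" using rr Hpos s by (intro mult_left_mono) auto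
        then have "H * s \<le> Q / 180" using C2 by simp
        then show ?thesis using Qpos by (simp add: a_def field_simps)
      qed
      have a2: "a * (real r - 1) \<le> 1/20"
      proof -
        have "real r - 1 \<le> (real r)^2" using rsq by (simp add: power2_eq_square)
        then have "H * s * (real r - 1) \<le> H * s * (real r)^2" using Hpos s by (intro mult_left_mono) auto
        then have "H * s * (real r - 1) \<le> Q / 20" using C2 by simp
        then show ?thesis using Qpos by (simp add: a_def field_simps)
      qed
      have b4: "b \<le> 4" using s Qpos by (simp add: b_def field_simps)
      have c1: "(real r)^2 / Q \<le> 1/20"
      proof -
        have "(real r)^2 \<le> H * s * (real r)^2" using Hs1 by (simp add: mult_le_cancel_right1)
        then show ?thesis using C2 Qpos by (simp add: field_simps)
      qed
      have c2: "H * s * (real r)^2 / Q \<le> 1/20" using C2 Qpos by (simp add: field_simps)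
      have HH: "H^2 \<le> 2/3 * H^3" "H \<le> 4/9 * H^3"
      proof -
        have "H^3 = H * H^2" by (simp add: power3_eq_cube power2_eq_square)
        moreover have "3/2 * H^2 \<le> H * H^2" using H by (intro mult_right_mono) auto
        ultimately show "H^2 \<le> 2/3 * H^3" by simp
        have "3/2 * H \<le> H * H" using H by (intro mult_right_mono) auto
        then have "H \<le> 2/3 * H^2" by (simp add: power2_eq_square)
        then show "H \<le> 4/9 * H^3" using \<open>H^2 \<le> 2/3 * H^3\<close> by simp
      qed
      have t0: "H * Y * 2^r / Q \<le> 3/4 * Y"
      proof -
        have "H * 2^r * Y \<le> 3/4 * Q * Y" using C1 Ypos by (intro mult_right_mono) auto
        then show ?thesis using Qpos by (simp add: field_simps)
      qed
      have t1: "x1 \<le> Y / 180 + 5 * H^2"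
      proof (cases "r \<ge> 4")
        case True
        then have "x1 = Y * a" by (simp add: x1_def a_def)
        also have "\<dots> \<le> Y * (1/180)" using a1 Ypos by (intro mult_left_mono) auto
        finally have "x1 \<le> Y / 180" by simp
        then show ?thesis using zero_le_power2[of H] by linarith
      next
        case False
        then have "x1 = 4 * H^2 * a + H^2 * b" using Qpos by (simp add: x1_def a_def b_def field_simps power2_eq_square)
        also have "\<dots> \<le> 4 * H^2 * (1/180) + H^2 * 4" using a1 b4 by (intro add_mono mult_left_mono) auto
        finally show ?thesis using Ypos zero_le_power2[of H] by linarith
      qed
      have t2: "x2 \<le> Y / 20 + 13 * H^2"
      proof -
        consider "r \<ge> 5" | "r = 4" | "r = 3" using r by linarith
        then show ?thesis
        proof cases
          case 1
          then have "x2 = Y * (a * (real r - 1))" by (simp add: x2_def a_def field_simps)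
          also have "\<dots> \<le> Y * (1/20)" using a2 Ypos by (intro mult_left_mono) auto
          finally show ?thesis using zero_le_power2[of H] by linarith
        next
          case 2
          then have "x2 = 12 * H^2 * a + 3 * H^2 * b" using Qpos by (simp add: x2_def a_def b_def field_simps power2_eq_square)
          also have "\<dots> \<le> 12 * H^2 * (1/180) + 3 * H^2 * 4" using a1 b4 by (intro add_mono mult_left_mono) auto
          finally show ?thesis using Ypos zero_le_power2[of H] by linarith
        next
          case 3
          then have "x2 = 2 * H^2 * b" by (simp add: x2_def b_def)
          also have "\<dots> \<le> 2 * H^2 * 4" using b4 by (intro mult_left_mono) auto
          finally show ?thesis using Ypos zero_le_power2[of H] by linarith
        qed
      qed
      have t4: "x4 \<le> H"
      proof (cases "r \<ge> 4")
        case True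
        then have "x4 = 2 * H * (a * (real r - 1))" by (simp add: x4_def a_def field_simps power2_eq_square)
        also have "\<dots> \<le> 2 * H * (1/20)" using a2 Hpos by (intro mult_left_mono) auto
        finally show ?thesis using Hpos by simp
      next
        case False then show ?thesis using Hpos by (simp add: x4_def)
      qed
      have t5: "x5 \<le> H^3 + H"
      proof (cases "r \<ge> 5")
        case True
        have rr2: "(real r - 1) * (real r - 2) \<le> (real r)^2" using True by (simp add: power2_eq_square algebra_simps)
        have "x5 = H * (4 * H^2 + H * s) * ((real r - 1) * (real r - 2)) / Q" using True by (simp add: x5_def)
        also have "\<dots> \<le> H * (4 * H^2 + H * s) * (real r)^2 / Q"
          using rr2 Hpos s Qpos by (intro divide_right_mono mult_left_mono) auto
        also have "\<dots> = 4 * H^3 * ((real r)^2 / Q) + H * (H * s * (real r)^2 / Q)"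
          using Qpos by (simp add: field_simps power2_eq_square power3_eq_cube)
        also have "\<dots> \<le> 4 * H^3 * (1/20) + H * (1/20)" using c1 c2 Hpos by (intro add_mono mult_left_mono) auto
        finally show ?thesis using Hpos HH by linarith
      next
        case False then show ?thesis using Hpos by (simp add: x5_def)
      qed
      have "H * Y * 2^r / Q + x1 + x2 + x3 + x4 + x5 \<le> 3/4 * Y + (Y / 180 + 5 * H^2) + (Y / 20 + 13 * H^2) + 2 * H + H + (H^3 + H)"
        using t0 t1 t2 t4 t5 by (simp add: x3_def)
      also have "\<dots> \<le> Y" using HH Y_def Hpos by (simp add: zero_less_power)
      finally show ?thesis .
    qed
  qed (use Kpos in simp)
  also have "K * Y = real r * BB H Q s s1 r"
  proof -
    have "(fact r :: real) = real r * fact (r - 1)" using r by (simp add: fact_reduce)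
    then show ?thesis using r by (simp add: BB_def K_def Y_def field_simps)
  qed
  finally show ?thesis .
qed



lemma cyc_link:
  assumes perm: "\<pi> permutes {1..n}"
  shows "(\<Sum>i=1..k. cyc_count n (\<pi> ^^ q) i) = card (Ys q k {1..n} \<pi>)"
proof -
  define \<sigma> where "\<sigma> = \<pi> ^^ q"
  have ps: "permutation \<sigma>" unfolding \<sigma>_def
    by (rule permutation_funpow) (use perm permutation_permutes in blast)
  define A where "A i = {orbit \<sigma> x | x. x \<in> {1..n} \<and> card (orbit \<sigma> x) = i}" for i
  have finA: "finite (A i)" for i
  proof -
    have "A i \<subseteq> orbit \<sigma> ` {1..n}" by (auto simp: A_def)
    then show ?thesis using finite_subset by blast
  qed
  have "(\<Sum>i=1..k. cyc_count n (\<pi> ^^ q) i) = (\<Sum>i\<in>{1..k}. card (A i))"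
    by (simp add: cyc_count_def A_def \<sigma>_def)
  also have "\<dots> = card (\<Union>i\<in>{1..k}. A i)"
    by (rule card_UN_disjoint[symmetric]) (auto simp: finA A_def)
  also have "(\<Union>i\<in>{1..k}. A i) = Ys q k {1..n} \<pi>"
  proof (intro set_eqI iffI)
    fix Ob assume "Ob \<in> (\<Union>i\<in>{1..k}. A i)"
    then show "Ob \<in> Ys q k {1..n} \<pi>" by (auto simp: A_def Ys_def \<sigma>_def)
  next
    fix Ob assume "Ob \<in> Ys q k {1..n} \<pi>"
    then obtain x where x: "x \<in> {1..n}" "Ob = orbit \<sigma> x" "card (orbit \<sigma> x) \<le> k"
      by (auto simp: Ys_def \<sigma>_def)
    have "card (orbit \<sigma> x) \<ge> 1"
      using finite_orbit_perm[OF ps, of x] permutation_self_in_orbit[OF ps, of x]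
      by (metis One_nat_def Suc_leI card_gt_0_iff empty_iff)
    then show "Ob \<in> (\<Union>i\<in>{1..k}. A i)" using x by (auto simp: A_def)
  qed
  finally show ?thesis .
qed

lemma per_k_bound:
  fixes q k R :: nat
  assumes q1: "q \<ge> 1" and k2: "k \<ge> 2"
    and cond: "\<And>r. 3 \<le> r \<Longrightarrow> r \<le> R \<Longrightarrow>
       (real k + 1) / 2 * 2^r \<le> 3/4 * real q \<and>
       (real k + 1) / 2 * real (card {d. d dvd q}) * (real r)^2 \<le> real q / 20"
    and finS: "finite S"
  shows "(\<Sum>\<pi>\<in>{\<pi>. \<pi> permutes S}. real (card (Ys q k S \<pi>) choose R))
     \<le> fact (card S) * BB ((real k + 1) / 2) (real q) (real (card {d. d dvd q})) (\<Sum>d\<in>{d. d dvd q}. real d) R"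
proof -
  define H where "H = (real k + 1) / 2"
  define Q where "Q = real q"
  define s where "s = real (card {d. d dvd q})"
  define s1 where "s1 = (\<Sum>d\<in>{d. d dvd q}. real d)"
  have H: "H \<ge> 3/2" using k2 by (simp add: H_def)
  have Q: "Q \<ge> 1" using q1 by (simp add: Q_def)
  have s: "s \<ge> 1" "s^2 \<le> 4 * Q" using sigma0_ge[OF q1] sigma0_sq[OF q1] by (simp_all add: s_def Q_def)
  have s1: "s1 \<le> Q * s" "s1 \<ge> 0" using sigma1_le[OF q1] by (simp_all add: s1_def Q_def s_def sum_nonneg)
  have HsH: "Hs k \<le> H" using Hs_le[of k] by (simp add: H_def)
  have bb0: "bb q i \<ge> 0" for i by (simp add: bb_def sum_nonneg)
  have Hs0: "Hs k \<ge> 0" by (simp add: Hs_def sum_nonneg)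
  have ppH: "pp q k i \<le> H * bb q i" if "i \<ge> 1" for i
  proof -
    have "pp q k i \<le> Hs k * bb q i" by (rule pp_le[OF q1 that])
    also have "\<dots> \<le> H * bb q i" using HsH bb0[of i] by (intro mult_right_mono) auto
    finally show ?thesis .
  qed
  have p0: "pp q k i \<ge> 0" for i by (simp add: pp_def sum_nonneg)
  have p1: "pp q k 1 \<le> H * s" using ppH[of 1] bb1[OF q1] by (simp add: s_def)
  have p2: "pp q k 2 \<le> H * s1 / 2"
  proof -
    have "pp q k 2 \<le> H * bb q 2" using ppH[of 2] by simp
    also have "\<dots> \<le> H * (s1 / 2)" using bb2[OF q1] H by (intro mult_left_mono) (auto simp: s1_def)
    finally show ?thesis by simp
  qed
  have p3: "pp q k i \<le> 2 * H * Q^(i - 1) / fact i" if "i \<ge> 3" for i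
  proof -
    have "pp q k i \<le> H * bb q i" using ppH[of i] that by simp
    also have "\<dots> \<le> H * (2 * Q^(i - 1) / fact i)" using bb_ge3[OF q1 that] H by (intro mult_left_mono) (auto simp: Q_def)
    finally show ?thesis by (simp add: field_simps)
  qed
  have B0: "BB H Q s s1 0 = 1" by (simp add: BB_def)
  have Bnn: "BB H Q s s1 r \<ge> 0" for r using H Q s s1 by (auto simp: BB_def)
  have rec: "(\<Sum>i=1..r. real i * pp q k i * BB H Q s s1 (r - i)) \<le> real r * BB H Q s s1 r"
    if r: "1 \<le> r" "r \<le> R" for r
  proof -
    consider "r = 1" | "r = 2" | "r \<ge> 3" using r by linarith
    then show ?thesis
    proof cases
      case 1 then show ?thesis using p1 by (simp add: BB_def)
    next
      case 2
      have "(\<Sum>i=1..r. real i * pp q k i * BB H Q s s1 (r - i)) = pp q k 1 * (H * s) + 2 * pp q k 2"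
        using 2 by (simp add: BB_def numeral_2_eq_2)
      also have "\<dots> \<le> (H * s) * (H * s) + 2 * (H * s1 / 2)"
        using p1 p2 H s by (intro add_mono mult_right_mono) auto
      also have "\<dots> = real r * BB H Q s s1 r" using 2 by (simp add: BB_def power2_eq_square)
      finally show ?thesis .
    next
      case 3
      have c: "H * 2^r \<le> 3/4 * Q" "H * s * (real r)^2 \<le> Q / 20"
        using cond[OF 3 r(2)] by (simp_all add: H_def Q_def s_def)
      show ?thesis by (rule rec_bound[OF H Q s s1 p0 p1 p2 p3 3 c])
    qed
  qed
  have "(\<Sum>\<pi>\<in>{\<pi>. \<pi> permutes S}. real (card (Ys q k S \<pi>) choose R)) \<le> fact (card S) * BB H Q s s1 R"
    by (rule main_ind[OF q1 B0 Bnn rec order_refl finS])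
  then show ?thesis by (simp add: H_def Q_def s_def s1_def)
qed

lemma pow2_lin: "j \<ge> 1 \<Longrightarrow> 2 * (real j + 2) \<le> 3 * 2^j"
proof (induction j)
  case 0 then show ?case by simp
next
  case (Suc j)
  show ?case
  proof (cases "j = 0")
    case True then show ?thesis by simp
  next
    case False
    then have "2 * (real j + 2) \<le> 3 * 2^j" using Suc by simp
    moreover have "(1::real) \<le> 2^j" by simp
    ultimately show ?thesis by simp
  qed
qed

lemma growth:
  fixes n :: nat
  assumes "n \<ge> 400 * 1024 * 11^11"
  shows "400 * (real n + 2)^10 \<le> 2^n"
proof -
  have n11: "n \<ge> 11" using assms by simp
  have n2: "real n \<ge> 2" using n11 by simp
  have "400 * (real n + 2)^10 \<le> 400 * (2 * real n)^10"
    using n2 by (intro mult_left_mono power_mono) auto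
  also have "\<dots> = 400 * 1024 * (real n)^10" by (simp add: power_mult_distrib)
  also have "\<dots> \<le> real n / 11^11 * (real n)^10"
  proof (rule mult_right_mono)
    have "real (400 * 1024 * 11^11) \<le> real n" using assms by (simp only: of_nat_le_iff)
    then show "400 * 1024 \<le> real n / 11^11" by (simp add: field_simps)
  qed simp
  also have "\<dots> = (real n)^(Suc 10) / 11^11" by (simp only: power_Suc) simp
  also have "\<dots> = (real n / 11)^11" by (simp add: power_divide)
  also have "\<dots> \<le> real (n choose 11)" using binomial_ge_n_over_k_pow_k[of 11 n, where 'a=real] n11 by simp
  also have "\<dots> \<le> 2^n" using binomial_le_pow2[of n 11] by (metis of_nat_le_iff of_nat_numeral of_nat_power)
  finally show ?thesis .
qed

lemma sq_trick:
  fixes a s Q :: real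
  assumes "a \<ge> 0" "s \<ge> 0" "s^2 \<le> 4 * Q" "4 * a^2 \<le> Q"
  shows "a * s \<le> Q"
proof -
  have a2: "a^2 \<ge> 0" by simp
  have Q0: "Q \<ge> 0" using assms(4) a2 by linarith
  have "(a * s)^2 = a^2 * s^2" by (rule power_mult_distrib)
  also have "\<dots> \<le> a^2 * (4 * Q)" by (rule mult_left_mono[OF assms(3) a2])
  also have "\<dots> = (4 * a^2) * Q" by simp
  also have "\<dots> \<le> Q * Q" by (rule mult_right_mono[OF assms(4) Q0])
  also have "\<dots> = Q^2" by (rule power2_eq_square[symmetric])
  finally have "(a * s)^2 \<le> Q^2" .
  then show ?thesis by (rule power2_le_imp_le[OF _ Q0])
qed

lemma fact_ratio:
  fixes r d :: nat
  shows "(fact (r + d) :: real) \<le> fact r * (real (r + d))^d"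
proof (induction d)
  case 0 then show ?case by simp
next
  case (Suc d)
  have "(fact (r + Suc d) :: real) = real (r + Suc d) * fact (r + d)" by simp
  also have "\<dots> \<le> real (r + Suc d) * (fact r * (real (r + d))^d)"
    using Suc by (intro mult_left_mono) auto
  also have "\<dots> \<le> real (r + Suc d) * (fact r * (real (r + Suc d))^d)"
    by (intro mult_left_mono power_mono) auto
  also have "\<dots> = fact r * (real (r + Suc d))^(Suc d)" by simp
  finally show ?case .
qed

lemma fact_pow4:
  fixes D :: nat and Q :: real
  assumes "D \<ge> 4" "real D \<le> Q"
  shows "(fact D :: real) \<le> (real D)^4 * Q^(D - 4)"
proof -
  have "(fact D :: real) \<le> real (D^D)" by (rule fact_le_power)
  also have "\<dots> = (real D)^4 * (real D)^(D - 4)"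
    using assms by (simp add: power_add[symmetric])
  also have "\<dots> \<le> (real D)^4 * Q^(D - 4)"
    using assms by (intro mult_left_mono power_mono) auto
  finally show ?thesis .
qed



lemma master_facts:
  fixes D H Q :: real
  assumes D: "D \<ge> 0" and H: "0 \<le> H" "H \<le> (D + 2) / 2" and M: "400 * (D + 2)^10 \<le> Q"
  shows "200 * H^3 * D^2 \<le> Q" "4 * D^4 * H^2 \<le> Q" "4 * (D^4 * H)^2 \<le> Q" "D^4 \<le> Q" "D \<le> Q"
    "4 * (20 * H * D^2)^2 \<le> Q"
proof -
  define E where "E = D + 2"
  have E1: "E \<ge> 1" using D by (simp add: E_def)
  have DE: "D \<le> E" by (simp add: E_def)
  have HE: "H \<le> E / 2" using H by (simp add: E_def)
  have pe: "E^a \<le> E^b" if "a \<le> b" for a b using E1 that by (simp add: power_increasing)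
  have M': "400 * E^10 \<le> Q" using M by (simp add: E_def)
  have E10: "E^10 \<ge> 0" using E1 by simp
  have "H^3 \<le> (E/2)^3" using H HE by (intro power_mono) auto
  moreover have "D^2 \<le> E^2" using D DE by (intro power_mono) auto
  ultimately have "200 * H^3 * D^2 \<le> 200 * (E/2)^3 * E^2" using H D E1
    by (intro mult_mono mult_left_mono) auto
  also have "\<dots> = 25 * E^5" by (simp add: power_divide field_simps power_add[symmetric])
  also have "\<dots> \<le> 400 * E^10" using pe[of 5 10] E10 by linarith
  finally show "200 * H^3 * D^2 \<le> Q" using M' E10 by linarith
  have "D^4 \<le> E^4" "H^2 \<le> (E/2)^2" using D DE H HE by (intro power_mono; simp)+
  then have "4 * D^4 * H^2 \<le> 4 * E^4 * (E/2)^2" using D by (intro mult_mono mult_left_mono) auto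
  also have "\<dots> = E^6" by (simp add: power_divide field_simps power_add[symmetric])
  also have "\<dots> \<le> 400 * E^10" using pe[of 6 10] E10 by linarith
  finally show "4 * D^4 * H^2 \<le> Q" using M' E10 by linarith
  have "D^8 \<le> E^8" using D DE by (intro power_mono) auto
  have "4 * (D^4 * H)^2 = 4 * D^8 * H^2" by (simp add: power_mult_distrib power_mult[symmetric])
  also have "\<dots> \<le> 4 * E^8 * (E/2)^2" using \<open>D^8 \<le> E^8\<close> \<open>H^2 \<le> (E/2)^2\<close> D by (intro mult_mono mult_left_mono) auto
  also have "\<dots> = E^10" by (simp add: power_divide field_simps power_add[symmetric])
  finally show "4 * (D^4 * H)^2 \<le> Q" using M' E10 by linarith
  have "D^4 \<le> E^4" using D DE by (intro power_mono) auto
  also have "\<dots> \<le> E^10" using pe[of 4 10] E10 by linarith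
  finally show "D^4 \<le> Q" using M' E10 by linarith
  have "D \<le> E" by fact
  also have "\<dots> = E^1" by simp
  also have "\<dots> \<le> E^10" using pe[of 1 10] E10 by linarith
  finally show "D \<le> Q" using M' E10 by linarith
  have "4 * (20 * H * D^2)^2 = 1600 * H^2 * D^4" by (simp add: power_mult_distrib power_mult[symmetric])
  also have "\<dots> \<le> 1600 * (E/2)^2 * E^4" using \<open>D^4 \<le> E^4\<close> \<open>H^2 \<le> (E/2)^2\<close>
    by (intro mult_mono mult_left_mono) auto
  also have "\<dots> = 400 * E^6" by (simp add: power_divide field_simps power_add[symmetric])
  also have "\<dots> \<le> 400 * E^10" using pe[of 6 10] E10 by linarith
  finally show "4 * (20 * H * D^2)^2 \<le> Q" using M' E10 by linarith
qed

lemma big_j: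
  fixes D :: nat and j :: nat and Q s s1 H :: real
  assumes D4: "D \<ge> 4" and j: "2 \<le> j" "j \<le> D" and Hd: "H = (real j + 2) / 2" and Q: "Q \<ge> 1"
    and s: "s \<ge> 0" "s^2 \<le> 4 * Q" and s1: "s1 \<le> Q * s" "s1 \<ge> 0"
    and M: "400 * (real D + 2)^10 \<le> Q"
  shows "real D * BB H Q s s1 (D - j) \<le> Q^(D - 2) / fact (D - 1)"
proof -
  have H0: "H \<ge> 0" "H \<le> (real D + 2) / 2" using Hd j by auto
  note K = master_facts[OF _ H0 M, simplified]
  have Dpos: "real D > 0" using D4 by simp
  have Qpos: "Q > 0" using Q by simp
  have fD: "(fact D :: real) = real D * fact (D - 1)" using D4 by (simp add: fact_reduce)
  have fD4: "(fact D :: real) \<le> (real D)^4 * Q^(D - 4)" using fact_pow4[OF D4 K(5)] .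
  have K3: "((real D)^4 * H) * s \<le> Q" by (rule sq_trick) (use H0 s K(3) in auto)
  have QD2: "Q^(D - 2) = Q^2 * Q^(D - 4)"
  proof -
    have e: "D - 2 = 2 + (D - 4)" using D4 by simp
    show ?thesis by (subst e) (rule power_add)
  qed
  have Q4: "Q^(D - 4) \<ge> 0" using Q by simp
  have goal: "real D * BB H Q s s1 (D - j) * fact (D - 1) \<le> Q^(D - 2)"
  proof -
    consider "D - j \<ge> 3" | "D - j = 2" | "D - j = 1" | "D - j = 0" by linarith
    then show ?thesis
    proof cases
      case 1
      define r where "r = D - j"
      have r3: "r \<ge> 3" using 1 r_def by simp
      have Dr: "D - 1 = r + (j - 1)" using j r_def r3 by simp
      have fr: "(fact (D - 1) :: real) \<le> fact r * (real D)^(j - 1)"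
      proof -
        have "(fact (r + (j - 1)) :: real) \<le> fact r * (real (r + (j - 1)))^(j - 1)" by (rule fact_ratio)
        also have "\<dots> \<le> fact r * (real D)^(j - 1)"
        proof (rule mult_left_mono)
          have "real (r + (j - 1)) \<le> real D" using Dr by linarith
          then show "(real (r + (j - 1)))^(j - 1) \<le> (real D)^(j - 1)" by (rule power_mono) simp
        qed simp
        finally show ?thesis using Dr by simp
      qed
      have BBr: "BB H Q s s1 r * fact r = 200 * H^3 * Q^(r - 1)" using r3 by (simp add: BB_def)
      have BB0: "BB H Q s s1 r \<ge> 0" using H0 Q r3 by (simp add: BB_def)
      have DBB0: "real D * BB H Q s s1 r \<ge> 0" using BB0 Dpos by simp
      have "real D * BB H Q s s1 r * fact (D - 1) \<le> real D * BB H Q s s1 r * (fact r * (real D)^(j - 1))"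
        by (rule mult_left_mono[OF fr DBB0])
      also have "\<dots> = (200 * H^3 * (real D)^2 * (real D)^(j - 2)) * Q^(r - 1)"
      proof -
        have e1: "real D * (real D)^(j - 1) = (real D)^2 * (real D)^(j - 2)"
        proof -
          have "j - 1 = Suc (j - 2)" using j by simp
          then have "(real D)^(j - 1) = real D * (real D)^(j - 2)" by simp
          then show ?thesis by (simp add: power2_eq_square)
        qed
        have "real D * BB H Q s s1 r * (fact r * (real D)^(j - 1))
            = (BB H Q s s1 r * fact r) * (real D * (real D)^(j - 1))" by (simp only: ac_simps)
        also have "\<dots> = (200 * H^3 * Q^(r - 1)) * ((real D)^2 * (real D)^(j - 2))" by (simp only: BBr e1)
        finally show ?thesis by (simp only: ac_simps)
      qed
      also have "\<dots> \<le> (Q * Q^(j - 2)) * Q^(r - 1)"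
      proof (rule mult_right_mono)
        have p1: "(real D)^(j - 2) \<le> Q^(j - 2)" by (rule power_mono) (use K(5) in simp_all)
        have "(200 * H^3 * (real D)^2) * (real D)^(j - 2) \<le> Q * Q^(j - 2)"
          by (rule mult_mono[OF K(1) p1]) (use Q in simp_all)
        then show "200 * H^3 * (real D)^2 * (real D)^(j - 2) \<le> Q * Q^(j - 2)" by simp
      qed (use Q in simp)
      also have "\<dots> = Q^(D - 2)"
      proof -
        have e: "D - 2 = Suc ((j - 2) + (r - 1))" using j r3 r_def by simp
        show ?thesis by (subst e) (simp only: power_Suc power_add mult.assoc)
      qed
      finally show ?thesis using r_def by simp
    next
      case 2
      have "BB H Q s s1 (D - j) = (H^2 * s^2 + H * s1) / 2" using 2 by (simp add: BB_def)
      also have "\<dots> \<le> (H^2 * (4 * Q) + H * (Q * s)) / 2"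
        using s s1 H0 by (intro divide_right_mono add_mono mult_left_mono) auto
      finally have bb: "BB H Q s s1 (D - j) \<le> Q * (4 * H^2 + H * s) / 2" by (simp add: field_simps)
      have "real D * BB H Q s s1 (D - j) * fact (D - 1) = fact D * BB H Q s s1 (D - j)" using fD by simp
      also have "\<dots> \<le> ((real D)^4 * Q^(D - 4)) * (Q * (4 * H^2 + H * s) / 2)"
      proof (rule mult_mono[OF fD4 bb])
        show "0 \<le> (real D)^4 * Q^(D - 4)" using Q by simp
        show "0 \<le> BB H Q s s1 (D - j)" using 2 H0 s s1 by (simp add: BB_def)
      qed
      also have "\<dots> = Q^(D - 4) * Q * ((4 * (real D)^4 * H^2) + ((real D)^4 * H) * s) / 2"
        by (simp add: field_simps)
      also have "\<dots> \<le> Q^(D - 4) * Q * (Q + Q) / 2"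
        using K(2) K3 Q4 Q by (intro divide_right_mono mult_left_mono add_mono) auto
      also have "\<dots> = Q^(D - 2)" using QD2 by (simp add: power2_eq_square)
      finally show ?thesis .
    next
      case 3
      have "real D * BB H Q s s1 (D - j) * fact (D - 1) = fact D * (H * s)" using fD 3 by (simp add: BB_def)
      also have "\<dots> \<le> ((real D)^4 * Q^(D - 4)) * (H * s)"
        using fD4 H0 s by (intro mult_right_mono) auto
      also have "\<dots> = Q^(D - 4) * (((real D)^4 * H) * s)" by (simp add: field_simps)
      also have "\<dots> \<le> Q^(D - 4) * Q^2"
      proof (rule mult_left_mono)
        have "Q \<le> Q^2" using Q by (simp add: power2_eq_square)
        then show "(real D)^4 * H * s \<le> Q^2" using K3 by linarith
      qed (use Q4 in auto)
      also have "\<dots> = Q^(D - 2)" using QD2 by simp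
      finally show ?thesis .
    next
      case 4
      have "real D * BB H Q s s1 (D - j) * fact (D - 1) = fact D" using fD 4 by (simp add: BB_def)
      also have "\<dots> \<le> (real D)^4 * Q^(D - 4)" by (rule fD4)
      also have "\<dots> \<le> Q^2 * Q^(D - 4)"
      proof (rule mult_right_mono)
        have "Q \<le> Q^2" using Q by (simp add: power2_eq_square)
        then show "(real D)^4 \<le> Q^2" using K(4) by linarith
      qed (use Q4 in auto)
      also have "\<dots> = Q^(D - 2)" using QD2 by simp
      finally show ?thesis .
    qed
  qed
  have "fact (D - 1) > (0::real)" by simp
  then show ?thesis using goal by (simp add: field_simps)
qed



theorem lemma6p2:
  shows "\<exists>(q0::nat) (C::real). C > 0 \<and>
    (\<forall>(q::nat) (\<Delta>::nat) (n::nat).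
       q \<ge> q0 \<longrightarrow> \<Delta> \<ge> 1 \<longrightarrow> real \<Delta> \<le> ln (real q) / ln 2 \<longrightarrow> n \<ge> 1 \<longrightarrow>
       (1 / fact n) * (\<Sum>j=1..\<Delta>. \<Sum>\<pi>\<in>{\<pi>. \<pi> permutes {1..n}}.
           real ((\<Sum>i=1..j+1. cyc_count n (\<pi> ^^ q) i) choose (\<Delta> - j)))
       \<le> (if \<Delta> = 1 then C
           else if \<Delta> = 2 then C * divisor_sigma 0 q
           else if \<Delta> = 3 then C * divisor_sigma 1 q
           else C * (1 / fact (\<Delta> - 1)) * real q ^ (\<Delta> - 2)))"
proof -
  define N0 :: nat where "N0 = 400 * 1024 * 11^11"
  define q0 :: nat where "q0 = 400 * (N0 + 2)^10"
  have q0pos: "q0 \<ge> 1" by (simp add: q0_def)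
  have main: "(1 / fact n) * (\<Sum>j=1..\<Delta>. \<Sum>\<pi>\<in>{\<pi>. \<pi> permutes {1..n}}.
           real ((\<Sum>i=1..j+1. cyc_count n (\<pi> ^^ q) i) choose (\<Delta> - j)))
       \<le> (if \<Delta> = 1 then 1000
           else if \<Delta> = 2 then 1000 * divisor_sigma 0 q
           else if \<Delta> = 3 then 1000 * divisor_sigma 1 q
           else 1000 * (1 / fact (\<Delta> - 1)) * real q ^ (\<Delta> - 2))"
    if asm: "q \<ge> q0" "\<Delta> \<ge> 1" "real \<Delta> \<le> ln (real q) / ln 2" "n \<ge> 1" for q \<Delta> n
  proof -
    have q1: "q \<ge> 1" using asm q0pos by simp
    define Q where "Q = real q"
    define s where "s = real (card {d. d dvd q})"
    define s1 where "s1 = (\<Sum>d\<in>{d. d dvd q}. real d)"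
    have Q1: "Q \<ge> 1" using q1 by (simp add: Q_def)
    have sfacts: "s \<ge> 1" "s^2 \<le> 4 * Q" "s1 \<le> Q * s" "s1 \<ge> Q" "s \<le> s1"
      using sigma0_ge[OF q1] sigma0_sq[OF q1] sigma1_le[OF q1] sigma1_ge[OF q1] sigma0_le_sigma1[OF q1]
      by (simp_all add: s_def s1_def Q_def)
    have pow: "(2::real)^\<Delta> \<le> Q"
    proof -
      have "real \<Delta> * ln 2 \<le> ln (real q)" using asm(3) by (simp add: le_divide_eq)
      then have "ln ((2::real)^\<Delta>) \<le> ln Q" by (simp add: ln_realpow Q_def)
      then show ?thesis using Q1 by simp
    qed
    have M: "400 * (real \<Delta> + 2)^10 \<le> Q"
    proof (cases "\<Delta> \<ge> N0")
      case True
      then have "400 * (real \<Delta> + 2)^10 \<le> 2^\<Delta>" using growth N0_def by simp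
      then show ?thesis using pow by simp
    next
      case False
      have "(real \<Delta> + 2)^10 \<le> (real N0 + 2)^10" using False by (intro power_mono) auto
      then have "400 * (real \<Delta> + 2)^10 \<le> real q0" by (simp add: q0_def)
      also have "\<dots> \<le> Q" using asm(1) by (simp add: Q_def)
      finally show ?thesis .
    qed
    define HH where "HH j = (real (j + 1) + 1) / 2" for j :: nat
    define BJ where "BJ j = BB (HH j) Q s s1 (\<Delta> - j)" for j
    have perj: "(\<Sum>\<pi>\<in>{\<pi>. \<pi> permutes {1..n}}. real ((\<Sum>i=1..j+1. cyc_count n (\<pi> ^^ q) i) choose (\<Delta> - j)))
        \<le> fact n * BJ j" if j: "j \<in> {1..\<Delta>}" for j
    proof -
      have "(\<Sum>\<pi>\<in>{\<pi>. \<pi> permutes {1..n}}. real ((\<Sum>i=1..j+1. cyc_count n (\<pi> ^^ q) i) choose (\<Delta> - j)))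
          = (\<Sum>\<pi>\<in>{\<pi>. \<pi> permutes {1..n}}. real (card (Ys q (j + 1) {1..n} \<pi>) choose (\<Delta> - j)))"
      proof (rule sum.cong[OF refl])
        fix \<pi> assume "\<pi> \<in> {\<pi>. \<pi> permutes {1..n}}"
        then have eq: "(\<Sum>i=1..j+1. cyc_count n (\<pi> ^^ q) i) = card (Ys q (j + 1) {1..n} \<pi>)"
          by (intro cyc_link) simp
        show "real ((\<Sum>i=1..j+1. cyc_count n (\<pi> ^^ q) i) choose (\<Delta> - j))
            = real (card (Ys q (j + 1) {1..n} \<pi>) choose (\<Delta> - j))" by (simp only: eq)
      qed
      also have "\<dots> \<le> fact (card {1..n}) * BB ((real (j + 1) + 1) / 2) (real q) (real (card {d. d dvd q}))
          (\<Sum>d\<in>{d. d dvd q}. real d) (\<Delta> - j)"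
      proof (rule per_k_bound[OF q1])
        show "2 \<le> j + 1" using j by simp
        show "finite {1..n}" by simp
        fix r assume r: "3 \<le> r" "r \<le> \<Delta> - j"
        have D4: "\<Delta> \<ge> 4" using r j by auto
        have H0: "0 \<le> HH j" "HH j \<le> (real \<Delta> + 2) / 2" using j by (auto simp: HH_def)
        have C1: "HH j * 2^r \<le> 3/4 * Q"
        proof -
          have "HH j * 2^r \<le> HH j * 2^(\<Delta> - j)" using r H0 by (intro mult_left_mono power_increasing) auto
          also have "\<dots> \<le> (3/4 * 2^j) * 2^(\<Delta> - j)"
          proof (rule mult_right_mono)
            show "HH j \<le> 3/4 * 2^j" using pow2_lin[of j] j by (simp add: HH_def)
          qed simp
          also have "\<dots> = 3/4 * 2^\<Delta>" using j by (simp add: power_add[symmetric])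
          also have "\<dots> \<le> 3/4 * Q" using pow by simp
          finally show ?thesis .
        qed
        have C2: "HH j * s * (real r)^2 \<le> Q / 20"
        proof -
          have rD: "(real r)^2 \<le> (real \<Delta>)^2" using r by (intro power_mono) auto
          have a0: "20 * HH j * (real r)^2 \<ge> 0" using H0 by simp
          have "20 * HH j * (real r)^2 \<le> 20 * HH j * (real \<Delta>)^2" using rD H0 by (intro mult_left_mono) auto
          then have "(20 * HH j * (real r)^2)^2 \<le> (20 * HH j * (real \<Delta>)^2)^2" using a0 by (intro power_mono) auto
          then have "4 * (20 * HH j * (real r)^2)^2 \<le> Q"
            using master_facts(6)[OF _ H0 M] by simp
          then have "(20 * HH j * (real r)^2) * s \<le> Q"
            using sq_trick[OF a0 _ sfacts(2)] sfacts(1) by simp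
          then show ?thesis by (simp add: mult_ac)
        qed
        show "(real (j + 1) + 1) / 2 * 2^r \<le> 3/4 * real q \<and>
           (real (j + 1) + 1) / 2 * real (card {d. d dvd q}) * (real r)^2 \<le> real q / 20"
          using C1 C2 by (simp add: HH_def Q_def s_def)
      qed
      also have "\<dots> = fact n * BJ j" by (simp add: BJ_def HH_def Q_def s_def s1_def)
      finally show ?thesis .
    qed
    have LHS: "(1 / fact n) * (\<Sum>j=1..\<Delta>. \<Sum>\<pi>\<in>{\<pi>. \<pi> permutes {1..n}}.
           real ((\<Sum>i=1..j+1. cyc_count n (\<pi> ^^ q) i) choose (\<Delta> - j))) \<le> (\<Sum>j=1..\<Delta>. BJ j)"
    proof -
      have "(\<Sum>j=1..\<Delta>. \<Sum>\<pi>\<in>{\<pi>. \<pi> permutes {1..n}}.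
           real ((\<Sum>i=1..j+1. cyc_count n (\<pi> ^^ q) i) choose (\<Delta> - j))) \<le> (\<Sum>j=1..\<Delta>. fact n * BJ j)"
        by (rule sum_mono) (rule perj)
      also have "\<dots> = fact n * (\<Sum>j=1..\<Delta>. BJ j)" by (simp add: sum_distrib_left)
      finally show ?thesis by (simp add: field_simps)
    qed
    have sig0: "divisor_sigma 0 q = s" using divisor_sigma0[OF q1] by (simp add: s_def)
    have sig1: "divisor_sigma 1 q = s1" using divisor_sigma1 by (simp add: s1_def)
    have fin: "(\<Sum>j=1..\<Delta>. BJ j) \<le> (if \<Delta> = 1 then 1000
           else if \<Delta> = 2 then 1000 * divisor_sigma 0 q
           else if \<Delta> = 3 then 1000 * divisor_sigma 1 q
           else 1000 * (1 / fact (\<Delta> - 1)) * real q ^ (\<Delta> - 2))"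
    proof -
    consider "\<Delta> = 1" | "\<Delta> = 2" | "\<Delta> = 3" | "\<Delta> \<ge> 4" using asm(2) by linarith
    then show ?thesis
    proof cases
      case 1
      have "(\<Sum>j=1..\<Delta>. BJ j) = 1" using 1 by (simp add: BJ_def BB_def)
      then show ?thesis using 1 by simp
    next
      case 2
      have "(\<Sum>j=1..\<Delta>. BJ j) = BJ 1 + BJ 2" using 2 by (simp add: numeral_2_eq_2)
      also have "\<dots> = 3/2 * s + 1" using 2 by (simp add: BJ_def BB_def HH_def)
      also have "\<dots> \<le> 1000 * s" using sfacts by simp
      finally show ?thesis using 2 sig0 by simp
    next
      case 3
      have "(\<Sum>j=1..\<Delta>. BJ j) = BJ 1 + BJ 2 + BJ 3" using 3 by (simp add: numeral_3_eq_3 numeral_2_eq_2)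
      also have "\<dots> = ((3/2)^2 * s^2 + 3/2 * s1) / 2 + 2 * s + 1" using 3 by (simp add: BJ_def BB_def HH_def)
      also have "\<dots> = 9/8 * s^2 + 3/4 * s1 + 2 * s + 1" by (simp add: field_simps)
      also have "\<dots> \<le> 1000 * s1" using sfacts by linarith
      finally show ?thesis using 3 sig1 by simp
    next
      case 4
      define T where "T = Q^(\<Delta> - 2) / fact (\<Delta> - 1)"
      have T0: "T \<ge> 0" using Q1 by (simp add: T_def)
      have "(\<Sum>j=1..\<Delta>. BJ j) = BJ 1 + (\<Sum>j=2..\<Delta>. BJ j)"
        using 4 by (simp add: sum.atLeast_Suc_atMost numeral_2_eq_2)
      also have "BJ 1 = 675 * T"
      proof -
        have "\<Delta> - 1 \<noteq> 0" "\<Delta> - 1 \<noteq> 1" "\<Delta> - 1 \<noteq> 2" "\<Delta> - 1 - 1 = \<Delta> - 2" using 4 by auto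
        then show ?thesis by (simp add: BJ_def BB_def HH_def T_def power3_eq_cube)
      qed
      also have "(\<Sum>j=2..\<Delta>. BJ j) \<le> (\<Sum>j=2..\<Delta>. T / real \<Delta>)"
      proof (rule sum_mono)
        fix j assume j: "j \<in> {2..\<Delta>}"
        have "real \<Delta> * BB ((real j + 2) / 2) Q s s1 (\<Delta> - j) \<le> Q^(\<Delta> - 2) / fact (\<Delta> - 1)"
          by (rule big_j[OF 4 _ _ refl Q1 _ sfacts(2) sfacts(3) _ M]) (use j sfacts in auto)
        moreover have "HH j = (real j + 2) / 2" by (simp add: HH_def)
        then have "BJ j = BB ((real j + 2) / 2) Q s s1 (\<Delta> - j)" by (simp only: BJ_def)
        ultimately have "real \<Delta> * BJ j \<le> T" by (simp only: T_def)
        then show "BJ j \<le> T / real \<Delta>" using 4 by (simp add: field_simps)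
      qed
      also have "(\<Sum>j=2..\<Delta>. T / real \<Delta>) \<le> T"
      proof -
        have "(\<Sum>j=2..\<Delta>. T / real \<Delta>) = real (\<Delta> - 1) * (T / real \<Delta>)" by simp
        also have "\<dots> \<le> real \<Delta> * (T / real \<Delta>)" using T0 4 by (intro mult_right_mono) auto
        also have "\<dots> = T" using 4 by simp
        finally show ?thesis .
      qed
      finally have "(\<Sum>j=1..\<Delta>. BJ j) \<le> 676 * T" by simp
      also have "\<dots> \<le> 1000 * T" using T0 by simp
      finally show ?thesis using 4 by (simp add: T_def Q_def)
    qed
    qed
    show ?thesis by (rule order_trans[OF LHS fin])
  qed
  show ?thesis
    by (rule exI[of _ q0], rule exI[of _ "1000::real"]) (use main in auto)
qed


end
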